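(* For $\mathbf k,\mathbf j\in\Lambda$, $$\langle\mathsf{TC}_{\mathbf k},\mathsf{TC}_{\mathbf j}\rangle_{\triangle_H}=\frac{\delta_{\mathbf k,\mathbf j}}{|\mathbf k\mathcal G|},$$ where $|\mathbf k\mathcal G|$ is the number of distinct vectors obtained by permuting the coordinates of $\mathbf k$ (so it equals $1$ for $\mathbf k=0$, $4$ for $\mathbf k$ of the form $(k,k,k,-3k)$ or $(3k,-k,-k,-k)$ with $k>0$, $6$ for $(2k,2k,-2k,-2k)$ with $k>0$, $12$ if exactly two coordinates of $\mathbf k$ coincide, and $24$ if all coordinates are distinct). For $\mathbf k,\mathbf j\in\Lambda^\circ$, $$\langle\mathsf{TS}_{\mathbf k},\mathsf{TS}_{\mathbf j}\rangle_{\triangle_H}=\tfrac1{24}\delta_{\mathbf k,\mathbf j}.$$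
   Context: Let $\mathbb R^4_H=\{\mathbf t\in\mathbb R^4: t_1+t_2+t_3+t_4=0\}$ with 3-dimensional Lebesgue measure $d\mathbf t$, $\mathbb Z^4_H=\mathbb Z^4\cap\mathbb R^4_H$, $\mathbb H=\{\mathbf k\in\mathbb Z^4_H: k_1\equiv k_2\equiv k_3\equiv k_4\pmod4\}$, $\phi_{\mathbf k}(\mathbf t)=e^{\frac{\pi i}{2}\mathbf k\cdot\mathbf t}$. Let $\mathcal G=S_4$ act on vectors by permuting coordinates, $\mathbf t\mapsto\mathbf t\sigma$, with sign $\operatorname{sgn}\sigma$. $\mathsf{TC}_{\mathbf k}(\mathbf t)=\frac1{24}\sum_{\sigma\in\mathcal G}\phi_{\mathbf k}(\mathbf t\sigma)$, $\mathsf{TS}_{\mathbf k}(\mathbf t)=-\frac1{24}\sum_{\sigma\in\mathcal G}\operatorname{sgn}(\sigma)\phi_{\mathbf k}(\mathbf t\sigma)$. $\Lambda=\{\mathbf k\in\mathbb H: k_1\ge k_2\ge k_3\ge k_4\}$, $\Lambda^\circ=\{\mathbf k\in\mathbb H: k_1>k_2>k_3>k_4\}$. $\triangle_H=\{\mathbf t\in\mathbb R^4_H: t_1-t_2,\,t_2-t_3,\,t_3-t_4,\,t_1-t_4\in[0,1]\}$ and $\langle f,g\rangle_{\triangle_H}=\frac1{|\triangle_H|}\int_{\triangle_H}f\bar g\,d\mathbf t$. *)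

theory Defs
  imports "HOL-Analysis.Analysis"
begin

definition G4 :: "(4 \<Rightarrow> 4) set" where
  "G4 = {\<sigma>. \<sigma> permutes (UNIV :: 4 set)}"

definition pvec :: "'a^4 \<Rightarrow> (4 \<Rightarrow> 4) \<Rightarrow> 'a^4" where
  "pvec t \<sigma> = (\<chi> i. t $ \<sigma> i)"

definition Z4H :: "(int^4) set" where
  "Z4H = {k. (\<Sum>i\<in>UNIV. k $ i) = 0}"

definition HH :: "(int^4) set" where
  "HH = {k \<in> Z4H. \<forall>i j. k $ i mod 4 = k $ j mod 4}"

definition Lam :: "(int^4) set" where
  "Lam = {k \<in> HH. k $ 1 \<ge> k $ 2 \<and> k $ 2 \<ge> k $ 3 \<and> k $ 3 \<ge> k $ 4}"

definition Lam_int :: "(int^4) set" where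
  "Lam_int = {k \<in> HH. k $ 1 > k $ 2 \<and> k $ 2 > k $ 3 \<and> k $ 3 > k $ 4}"

definition phi :: "int^4 \<Rightarrow> real^4 \<Rightarrow> complex" where
  "phi k t = exp (complex_of_real (pi / 2) * \<i> *
                  complex_of_real (\<Sum>i\<in>UNIV. real_of_int (k $ i) * t $ i))"

definition TC :: "int^4 \<Rightarrow> real^4 \<Rightarrow> complex" where
  "TC k t = (1/24) * (\<Sum>\<sigma>\<in>G4. phi k (pvec t \<sigma>))"

definition TS :: "int^4 \<Rightarrow> real^4 \<Rightarrow> complex" where
  "TS k t = - (1/24) * (\<Sum>\<sigma>\<in>G4. of_int (sign \<sigma>) * phi k (pvec t \<sigma>))"

text \<open>The hyperplane R^4_H is parametrised by its first three coordinates,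
  t = (t1, t2, t3, -(t1+t2+t3)).  This pushes 3-dimensional Lebesgue measure on R^3
  to a constant multiple of 3-dimensional Lebesgue (surface) measure on R^4_H; the
  constant cancels in the normalised inner product below.\<close>

definition embH :: "real^3 \<Rightarrow> real^4" where
  "embH x = (\<chi> i. if i = 1 then x $ 1 else if i = 2 then x $ 2 else if i = 3 then x $ 3
                   else - (x $ 1 + x $ 2 + x $ 3))"

definition triH :: "(real^4) set" where
  "triH = {t. (\<Sum>i\<in>UNIV. t $ i) = 0 \<and>
              t $ 1 - t $ 2 \<in> {0..1} \<and> t $ 2 - t $ 3 \<in> {0..1} \<and>
              t $ 3 - t $ 4 \<in> {0..1} \<and> t $ 1 - t $ 4 \<in> {0..1}}"

definition triH_param :: "(real^3) set" where
  "triH_param = embH -` triH"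

definition ipH :: "(real^4 \<Rightarrow> complex) \<Rightarrow> (real^4 \<Rightarrow> complex) \<Rightarrow> complex" where
  "ipH f g = integral triH_param (\<lambda>x. f (embH x) * cnj (g (embH x)))
             / complex_of_real (measure lebesgue triH_param)"

definition orbit_card :: "int^4 \<Rightarrow> nat" where
  "orbit_card k = card (pvec k ` G4)"

end

theory Submission
  imports Defs
begin


definition proj3 :: "real^4 \<Rightarrow> real^3" where
  "proj3 t = vector [t$1, t$2, t$3]"

definition Pm :: "(4\<Rightarrow>4) \<Rightarrow> real^3 \<Rightarrow> real^3" where
  "Pm \<sigma> x = proj3 (pvec (embH x) \<sigma>)"

lemma embH_nth[simp]:
  "embH x $ 1 = x $ 1" "embH x $ 2 = x $ 2" "embH x $ 3 = x $ 3"
  "embH x $ 4 = - (x $ 1 + x $ 2 + x $ 3)"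
  by (simp_all add: embH_def)

lemma proj3_nth[simp]: "proj3 t $ 1 = t $ 1" "proj3 t $ 2 = t $ 2" "proj3 t $ 3 = t $ 3"
  by (simp_all add: proj3_def)

lemma sum_embH: "(\<Sum>i\<in>UNIV. embH x $ i) = 0"
  by (simp add: sum_4)

lemma proj3_embH[simp]: "proj3 (embH x) = x"
  by (simp add: vec_eq_iff forall_3)

lemma embH_proj3: "(\<Sum>i\<in>UNIV. t $ i) = 0 \<Longrightarrow> embH (proj3 t) = t"
  by (simp add: vec_eq_iff forall_4 sum_4)

lemma G4_perm: "\<sigma> \<in> G4 \<Longrightarrow> \<sigma> permutes UNIV"
  by (simp add: G4_def)

lemma pvec_nth[simp]: "pvec t \<sigma> $ i = t $ \<sigma> i"
  by (simp add: pvec_def)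

lemma sum_pvec: "\<sigma> permutes UNIV \<Longrightarrow> (\<Sum>i\<in>UNIV. t $ \<sigma> i) = (\<Sum>i\<in>UNIV. t $ i)"
  using sum.permute[of \<sigma> UNIV "\<lambda>i. t $ i"] unfolding o_def by simp

lemma embH_Pm: "\<sigma> \<in> G4 \<Longrightarrow> embH (Pm \<sigma> x) = pvec (embH x) \<sigma>"
  unfolding Pm_def
  by (rule embH_proj3) (simp add: sum_pvec G4_perm sum_embH)

lemma pvec_pvec: "pvec (pvec t \<sigma>) \<tau> = pvec t (\<sigma> \<circ> \<tau>)"
  by (simp add: vec_eq_iff)

lemma Pm_Pm: "\<sigma> \<in> G4 \<Longrightarrow> Pm \<tau> (Pm \<sigma> x) = Pm (\<sigma> \<circ> \<tau>) x"
  by (simp add: Pm_def[of \<tau>] embH_Pm pvec_pvec) (simp add: Pm_def)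

lemma Pm_id: "Pm id x = x"
  by (simp add: Pm_def vec_eq_iff pvec_def)

lemma embH_add: "embH (x + y) = embH x + embH y"
  by (simp add: vec_eq_iff forall_4)
lemma embH_scale: "embH (c *\<^sub>R x) = c *\<^sub>R embH x"
  by (simp add: vec_eq_iff forall_4 algebra_simps)

lemma linear_Pm: "linear (Pm \<sigma>)"
  by (rule linearI) (simp_all add: Pm_def vec_eq_iff forall_3 embH_add embH_scale)

lemma G4_comp: "\<sigma> \<in> G4 \<Longrightarrow> \<tau> \<in> G4 \<Longrightarrow> \<sigma> \<circ> \<tau> \<in> G4"
  by (simp add: G4_def permutes_compose)
lemma G4_inv: "\<sigma> \<in> G4 \<Longrightarrow> inv \<sigma> \<in> G4"
  by (simp add: G4_def permutes_inv)

lemma Pm_inv1: "\<sigma> \<in> G4 \<Longrightarrow> Pm (inv \<sigma>) (Pm \<sigma> x) = x"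
  by (metis Pm_Pm Pm_id G4_perm permutes_inv_o(1))
lemma Pm_inv2: "\<sigma> \<in> G4 \<Longrightarrow> Pm \<sigma> (Pm (inv \<sigma>) x) = x"
  by (metis Pm_Pm Pm_id G4_perm permutes_inv_o(2) G4_inv)

lemma bij_Pm: "\<sigma> \<in> G4 \<Longrightarrow> bij (Pm \<sigma>)"
  by (metis Pm_inv1 Pm_inv2 bij_betw_byWitness subset_UNIV)

definition C2 :: "complex \<Rightarrow> real^2" where "C2 z = vector [Re z, Im z]"
definition D2 :: "real^2 \<Rightarrow> complex" where "D2 v = Complex (v$1) (v$2)"

lemma bl_C2: "bounded_linear C2"
proof -
  have "linear C2" by (rule linearI) (simp_all add: C2_def vec_eq_iff forall_2)
  then show ?thesis by (simp add: linear_conv_bounded_linear)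
qed

lemma bl_D2: "bounded_linear D2"
proof -
  have "linear D2" by (rule linearI) (simp_all add: D2_def complex_eq_iff)
  then show ?thesis by (simp add: linear_conv_bounded_linear)
qed

lemma D2_C2: "D2 (C2 z) = z" by (simp add: C2_def D2_def complex_eq_iff)

lemma cov_UNIV:
  fixes f :: "real^3 \<Rightarrow> complex" and g :: "real^3 \<Rightarrow> real^3"
  assumes L: "linear L" and det: "\<bar>det (matrix L)\<bar> = 1" and g: "\<And>x. g x = L x + c"
    and bij: "bij g" and f: "f absolutely_integrable_on UNIV"
  shows "(\<lambda>x. f (g x)) absolutely_integrable_on UNIV \<and> integral UNIV (\<lambda>x. f (g x)) = integral UNIV f"
proof -
  define h where "h = C2 \<circ> f"
  have h: "h absolutely_integrable_on UNIV"
    unfolding h_def by (rule absolutely_integrable_linear[OF f bl_C2])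
  have der: "(g has_derivative L) (at x within UNIV)" for x
  proof -
    have "((\<lambda>x. L x + c) has_derivative L) (at x)"
      by (rule has_derivative_add_const[OF linear_imp_has_derivative[OF L]])
    moreover have "g = (\<lambda>x. L x + c)" using g by auto
    ultimately show ?thesis by simp
  qed
  have inj: "inj_on g UNIV" using bij by (simp add: bij_def)
  have im: "g ` UNIV = UNIV" using bij by (simp add: bij_def)
  have "(\<lambda>x. \<bar>det (matrix L)\<bar> *\<^sub>R h (g x)) absolutely_integrable_on UNIV \<and>
        integral UNIV (\<lambda>x. \<bar>det (matrix L)\<bar> *\<^sub>R h (g x)) = integral UNIV h"
    using has_absolute_integral_change_of_variables[of UNIV g "\<lambda>x. L" h "integral UNIV h"] der inj im h
    by simp
  then have hg: "(\<lambda>x. h (g x)) absolutely_integrable_on UNIV"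
     and hgi: "integral UNIV (\<lambda>x. h (g x)) = integral UNIV h"
    using det by simp_all
  have fg: "(\<lambda>x. f (g x)) = D2 \<circ> (\<lambda>x. h (g x))"
    by (simp add: h_def fun_eq_iff D2_C2)
  have "(\<lambda>x. f (g x)) absolutely_integrable_on UNIV"
    unfolding fg by (rule absolutely_integrable_linear[OF hg bl_D2])
  moreover have "integral UNIV (\<lambda>x. f (g x)) = integral UNIV f"
  proof -
    have "integral UNIV (\<lambda>x. f (g x)) = D2 (integral UNIV (\<lambda>x. h (g x)))"
      unfolding fg by (rule integral_linear[OF _ bl_D2]) (use hg absolutely_integrable_on_def in blast)
    also have "\<dots> = D2 (integral UNIV h)" by (simp add: hgi)
    also have "\<dots> = integral UNIV (D2 \<circ> h)"
      by (rule integral_linear[symmetric, OF _ bl_D2]) (use h absolutely_integrable_on_def in blast)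
    also have "D2 \<circ> h = f" by (simp add: h_def fun_eq_iff D2_C2)
    finally show ?thesis .
  qed
  ultimately show ?thesis by blast
qed


definition intv :: "real^3 \<Rightarrow> bool" where "intv p \<longleftrightarrow> (\<forall>i. p $ i \<in> \<int>)"

lemma embH_Ints: "intv y \<Longrightarrow> embH y $ m \<in> \<int>"
  using exhaust_4[of m] by (auto simp: intv_def)

lemma Pm_nth_ex: "\<exists>m. Pm \<tau> y $ i = embH y $ m"
  using exhaust_3[of i] by (auto simp: Pm_def)

lemma Pm_intv: "intv y \<Longrightarrow> intv (Pm \<tau> y)"
  using Pm_nth_ex embH_Ints unfolding intv_def by metis

lemma det_Ints: "(\<And>i j. A$i$j \<in> \<int>) \<Longrightarrow> det (A::real^'n^'n) \<in> \<int>"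
  unfolding det_def by (intro Ints_sum Ints_mult Ints_prod) auto

lemma intv_axis: "intv (axis j 1)"
  by (auto simp: intv_def axis_def)

lemma det_Pm_Ints: "det (matrix (Pm \<sigma>)) \<in> \<int>"
  apply (rule det_Ints)
  unfolding matrix_def using Pm_intv[OF intv_axis] by (simp add: intv_def)

lemma det_Pm: assumes "\<sigma> \<in> G4" shows "\<bar>det (matrix (Pm \<sigma>))\<bar> = 1"
proof -
  have "Pm \<sigma> \<circ> Pm (inv \<sigma>) = id" using Pm_inv2[OF assms] by (auto simp: fun_eq_iff)
  then have "matrix (Pm \<sigma>) ** matrix (Pm (inv \<sigma>)) = matrix id"
    by (metis linear_Pm matrix_compose)
  then have "det (matrix (Pm \<sigma>)) * det (matrix (Pm (inv \<sigma>))) = 1"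
    by (metis det_mul matrix_id)
  moreover obtain a where a: "det (matrix (Pm \<sigma>)) = of_int a" using det_Pm_Ints Ints_cases by metis
  moreover obtain b where b: "det (matrix (Pm (inv \<sigma>))) = of_int b" using det_Pm_Ints Ints_cases by metis
  ultimately have "a * b = 1" by (metis of_int_eq_1_iff of_int_mult)
  then have "\<bar>a\<bar> = 1" using zmult_eq_1_iff by auto
  then show ?thesis using a by simp
qed

lemma negl_lin: fixes a :: "real^3" assumes "a \<noteq> 0" shows "negligible {x. a \<bullet> x \<in> \<int>}"
proof -
  have "{x. a \<bullet> x \<in> \<int>} = \<Union> ((\<lambda>n::int. {x. a \<bullet> x = of_int n}) ` UNIV)"
    by (auto simp: Ints_def)
  also have "negligible \<dots>"
    by (rule negligible_countable_Union) (auto intro: negligible_hyperplane simp: assms)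
  finally show ?thesis .
qed

lemma axis_inner: "axis i 1 \<bullet> (x::real^3) = x $ i"
  by (simp add: inner_commute inner_axis)

definition N0 :: "(real^3) set" where "N0 = {z. \<exists>i. z $ i \<in> \<int>}"

lemma negl_N0: "negligible N0"
proof -
  have "N0 = \<Union> ((\<lambda>i. {x. axis i 1 \<bullet> x \<in> \<int>}) ` UNIV)"
    by (auto simp: N0_def axis_inner)
  also have "negligible \<dots>"
    by (rule negligible_Union) (auto intro!: negl_lin simp: axis_eq_0_iff)
  finally show ?thesis .
qed

lemma AI:
  fixes G :: "real^3 \<Rightarrow> complex"
  assumes "compact K" "continuous_on UNIV G"
  shows "G absolutely_integrable_on K"
proof -
  obtain a b where K: "K \<subseteq> cbox a b"
    using compact_imp_bounded[OF assms(1)] bounded_subset_cbox_symmetric by metis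
  have "G absolutely_integrable_on cbox a b"
    by (rule absolutely_integrable_continuous) (use assms continuous_on_subset in blast)
  moreover have "K \<in> sets lebesgue" using assms(1) lmeasurable_compact by blast
  ultimately show ?thesis using K set_integrable_subset by blast
qed

lemma AIU:
  fixes G :: "real^3 \<Rightarrow> complex"
  assumes "compact K" "continuous_on UNIV G"
  shows "(\<lambda>x. if x \<in> K then G x else 0) absolutely_integrable_on UNIV"
  using AI[OF assms] absolutely_integrable_restrict_UNIV by blast

lemma AIU_int:
  fixes G :: "real^3 \<Rightarrow> complex"
  assumes "compact K" "continuous_on UNIV G"
  shows "(\<lambda>x. if x \<in> K then G x else 0) integrable_on UNIV"
  using AIU[OF assms] set_lebesgue_integral_eq_integral(1) absolutely_integrable_on_def by blast

lemma transl_UNIV: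
  fixes f :: "real^3 \<Rightarrow> complex"
  assumes "f absolutely_integrable_on UNIV"
  shows "integral UNIV (\<lambda>x. f (x + p)) = integral UNIV f"
proof -
  have "bij (\<lambda>x::real^3. x + p)"
    by (rule bij_betw_byWitness[where f' = "\<lambda>x. x - p"]) auto
  then show ?thesis
    using cov_UNIV[of id "\<lambda>x. x + p" p f] assms by (simp add: linear_id)
qed

lemma floor_char:
  fixes z p :: real
  assumes "p \<in> \<int>" "z \<notin> \<int>"
  shows "(0 \<le> z - p \<and> z - p \<le> 1) \<longleftrightarrow> p = of_int \<lfloor>z\<rfloor>"
proof -
  obtain m where m: "p = of_int m" using assms(1) Ints_cases by blast
  have "z \<noteq> of_int (m + 1)" using assms(2) by (metis Ints_of_int)
  show ?thesis
  proof
    assume "0 \<le> z - p \<and> z - p \<le> 1"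
    then have "of_int m \<le> z \<and> z < of_int m + 1" using m \<open>z \<noteq> of_int (m + 1)\<close> by auto
    then have "\<lfloor>z\<rfloor> = m" by (simp add: floor_eq_iff)
    then show "p = of_int \<lfloor>z\<rfloor>" using m by simp
  next
    assume "p = of_int \<lfloor>z\<rfloor>"
    then show "0 \<le> z - p \<and> z - p \<le> 1"
      using of_int_floor_le[of z] real_of_int_floor_add_one_gt[of z] by linarith
  qed
qed




definition B :: "(real^3) set" where "B = {p. \<forall>i. p $ i \<in> {-1,0,1}}"

lemma finite_B: "finite B"
proof -
  have "B \<subseteq> (\<lambda>f. \<chi> i. f i) ` (Pi\<^sub>E UNIV (\<lambda>_. {-1,0,1::real}))"
  proof
    fix p assume "p \<in> B"
    then have "(\<lambda>i. p$i) \<in> Pi\<^sub>E UNIV (\<lambda>_. {-1,0,1})" by (auto simp: B_def PiE_iff)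
    moreover have "p = (\<chi> i. (\<lambda>i. p$i) i)" by simp
    ultimately show "p \<in> (\<lambda>f. \<chi> i. f i) ` (Pi\<^sub>E UNIV (\<lambda>_. {-1,0,1::real}))" by blast
  qed
  then show ?thesis by (rule finite_subset) (intro finite_imageI finite_PiE; simp)
qed

lemma B_intv: "p \<in> B \<Longrightarrow> intv p"
  unfolding intv_def
proof
  fix i assume "p \<in> B"
  then have "p$i = -1 \<or> p$i = 0 \<or> p$i = 1" by (auto simp: B_def)
  then show "p$i \<in> \<int>" by auto
qed

definition C :: "(real^3) set" where "C = cbox 0 1"

lemma mem_C: "x \<in> C \<longleftrightarrow> (\<forall>i. 0 \<le> x $ i \<and> x $ i \<le> 1)"
  by (simp add: C_def mem_box_cart)

lemma compact_C: "compact C" by (simp add: C_def)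

definition periodic :: "(real^3 \<Rightarrow> complex) \<Rightarrow> bool" where
  "periodic G \<longleftrightarrow> (\<forall>x p. intv p \<longrightarrow> G (x + p) = G x)"

lemma L4:
  fixes G :: "real^3 \<Rightarrow> complex"
  assumes cont: "continuous_on UNIV G" and per: "periodic G" and S: "compact S"
    and Sb: "\<And>z i. z \<in> S \<Longrightarrow> -1 \<le> z $ i \<and> z $ i \<le> 2"
  shows "integral S G = (\<Sum>p\<in>B. integral UNIV (\<lambda>x. if x \<in> C \<and> x + p \<in> S then G x else 0))"
proof -
  have cs: "compact {z. z - p \<in> C \<and> z \<in> S}" for p
  proof -
    have e: "{z. z - p \<in> C \<and> z \<in> S} = S \<inter> ((+) p ` C)"
      by (auto simp: image_iff) (metis add.commute diff_add_cancel)
    have "compact ((+) p ` C)" using compact_C by (rule compact_translation)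
    then show ?thesis unfolding e using S by (simp add: compact_Int_closed compact_imp_closed)
  qed
  have "integral S G = integral UNIV (\<lambda>z. if z \<in> S then G z else 0)"
    by (simp add: Henstock_Kurzweil_Integration.integral_restrict_UNIV)
  also have "\<dots> = integral UNIV (\<lambda>z. \<Sum>p\<in>B. if z - p \<in> C \<and> z \<in> S then G z else 0)"
  proof (rule integral_spike[OF negl_N0])
    fix z assume z: "z \<in> UNIV - N0"
    show "(\<Sum>p\<in>B. if z - p \<in> C \<and> z \<in> S then G z else 0) = (if z \<in> S then G z else 0)"
    proof (cases "z \<in> S")
      case False then show ?thesis by simp
    next
      case True
      define pf :: "real^3" where "pf = (\<chi> i. of_int \<lfloor>z $ i\<rfloor>)"
      have zi: "z $ i \<notin> \<int>" for i using z by (auto simp: N0_def)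
      have pfB: "pf \<in> B"
      proof -
        have "of_int \<lfloor>z $ i\<rfloor> \<in> {-1, 0, 1::real}" for i
        proof -
          have "-1 \<le> z $ i" "z $ i \<le> 2" using Sb[OF True] by auto
          moreover have "z $ i \<noteq> 2" using zi[of i] by (metis Ints_numeral)
          ultimately have "-1 \<le> \<lfloor>z $ i\<rfloor>" "\<lfloor>z $ i\<rfloor> \<le> 1"
            by (simp_all add: le_floor_iff floor_le_iff)
          then have "\<lfloor>z $ i\<rfloor> = -1 \<or> \<lfloor>z $ i\<rfloor> = 0 \<or> \<lfloor>z $ i\<rfloor> = 1" by arith
          then show ?thesis by auto
        qed
        then show ?thesis by (simp add: B_def pf_def)
      qed
      have eq: "z - p \<in> C \<longleftrightarrow> p = pf" if "p \<in> B" for p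
      proof -
        have "z - p \<in> C \<longleftrightarrow> (\<forall>i. p $ i = of_int \<lfloor>z $ i\<rfloor>)"
          using floor_char[OF _ zi] B_intv[OF that] by (simp add: mem_C intv_def)
        also have "\<dots> \<longleftrightarrow> p = pf" by (simp add: pf_def vec_eq_iff)
        finally show ?thesis .
      qed
      have "(\<Sum>p\<in>B. if z - p \<in> C \<and> z \<in> S then G z else 0) = (\<Sum>p\<in>B. if p = pf then G z else 0)"
        by (rule sum.cong) (use eq True in auto)
      also have "\<dots> = G z" using pfB finite_B by simp
      finally show ?thesis using True by simp
    qed
  qed
  also have "\<dots> = (\<Sum>p\<in>B. integral UNIV (\<lambda>z. if z - p \<in> C \<and> z \<in> S then G z else 0))"
  proof (rule integral_sum[OF finite_B])
    fix p assume "p \<in> B"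
    show "(\<lambda>z. if z - p \<in> C \<and> z \<in> S then G z else 0) integrable_on UNIV"
      using AIU_int[OF cs cont, of p] by simp
  qed
  also have "\<dots> = (\<Sum>p\<in>B. integral UNIV (\<lambda>x. if x \<in> C \<and> x + p \<in> S then G x else 0))"
  proof (rule sum.cong[OF refl])
    fix p assume p: "p \<in> B"
    have "integral UNIV (\<lambda>z. if z - p \<in> C \<and> z \<in> S then G z else 0)
        = integral UNIV (\<lambda>x. (\<lambda>z. if z - p \<in> C \<and> z \<in> S then G z else 0) (x + p))"
      by (rule transl_UNIV[symmetric]) (use AIU[OF cs cont, of p] in simp)
    also have "\<dots> = integral UNIV (\<lambda>x. if x \<in> C \<and> x + p \<in> S then G x else 0)"
    proof -
      have gx: "G (x + p) = G x" for x using per B_intv[OF p] by (simp add: periodic_def)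
      show ?thesis by (rule arg_cong[of _ _ "integral UNIV"], rule ext) (simp add: gx)
    qed
    finally show "integral UNIV (\<lambda>z. if z - p \<in> C \<and> z \<in> S then G z else 0)
        = integral UNIV (\<lambda>x. if x \<in> C \<and> x + p \<in> S then G x else 0)" .
  qed
  finally show ?thesis .
qed





lemma univ4: assumes "distinct [a,b,c,d::4]" shows "UNIV = {a,b,c,d}"
proof -
  have "card {a,b,c,d} = 4" using assms by simp
  moreover have "card (UNIV::4 set) = 4" by simp
  ultimately show ?thesis
    using card_seteq[of UNIV "{a,b,c,d}"] by simp
qed

lemma perm4:
  assumes "distinct [a,b,c,d::4]"
  shows "(\<lambda>i. if i = 1 then a else if i = 2 then b else if i = 3 then c else d) \<in> G4"
proof -
  let ?p = "(\<lambda>i::4. if i = 1 then a else if i = 2 then b else if i = 3 then c else d)"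
  have "inj ?p"
  proof (rule injI)
    fix i j assume "?p i = ?p j"
    then show "i = j" using assms exhaust_4[of i] exhaust_4[of j] by auto
  qed
  then have "bij ?p" using finite_UNIV_inj_surj[of ?p] by (simp add: bij_def)
  then show ?thesis unfolding G4_def by (auto intro: bij_imp_permutes)
qed

lemma exmax: fixes f :: "'a \<Rightarrow> real" assumes "finite A" "A \<noteq> {}"
  shows "\<exists>a\<in>A. \<forall>k\<in>A. f k \<le> f a"
proof -
  have "Max (f ` A) \<in> f ` A" using assms by (intro Max_in) auto
  then obtain a where "a \<in> A" "f a = Max (f ` A)" by (metis imageE)
  then show ?thesis using assms by (intro bexI[of _ a]) (auto intro!: Max_ge)
qed

lemma sortabcd:
  fixes f :: "4 \<Rightarrow> real" assumes inj: "inj f"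
  shows "\<exists>a b c d. distinct [a,b,c,d] \<and> f a > f b \<and> f b > f c \<and> f c > f d"
proof -
  have ne: "UNIV - X \<noteq> {}" if "card X \<le> 3" for X :: "4 set"
  proof
    assume "UNIV - X = {}"
    then have "X = UNIV" by auto
    then show False using that by simp
  qed
  obtain a where a: "\<forall>k. f k \<le> f a" using exmax[of UNIV f] by auto
  obtain b where b: "b \<noteq> a" "\<forall>k. k \<noteq> a \<longrightarrow> f k \<le> f b"
    using exmax[of "UNIV - {a}" f] ne[of "{a}"] by auto
  have "card {a,b} \<le> 3" by (intro card_insert_le_m1) auto
  then obtain c where c: "c \<noteq> a" "c \<noteq> b" "\<forall>k. k \<noteq> a \<and> k \<noteq> b \<longrightarrow> f k \<le> f c"
    using exmax[of "UNIV - {a,b}" f] ne[of "{a,b}"] by auto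
  have "card {a,b,c} \<le> 3" by (intro card_insert_le_m1) auto
  then obtain d where d: "d \<noteq> a" "d \<noteq> b" "d \<noteq> c"
    using ne[of "{a,b,c}"] by auto
  have "f a > f b" using a b inj by (metis injD order_le_neq_trans)
  moreover have "f b > f c" using b c inj by (metis injD order_le_neq_trans)
  moreover have "f c > f d" using c d inj by (metis injD order_le_neq_trans)
  ultimately show ?thesis using b c d by (intro exI[of _ a] exI[of _ b] exI[of _ c] exI[of _ d]) auto
qed

lemma sort4_ex:
  fixes f :: "4 \<Rightarrow> real" assumes inj: "inj f"
  shows "\<exists>\<sigma>\<in>G4. f (\<sigma> 1) > f (\<sigma> 2) \<and> f (\<sigma> 2) > f (\<sigma> 3) \<and> f (\<sigma> 3) > f (\<sigma> 4)"
proof -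
  obtain a b c d where abcd: "distinct [a,b,c,d]" "f a > f b" "f b > f c" "f c > f d"
    using sortabcd[OF inj] by blast
  show ?thesis
    by (rule bexI[OF _ perm4[OF abcd(1)]]) (simp add: abcd(2-4))
qed

lemma G4_cover: "\<sigma> \<in> G4 \<Longrightarrow> k = \<sigma> 1 \<or> k = \<sigma> 2 \<or> k = \<sigma> 3 \<or> k = \<sigma> 4"
  using permutes_inverses(1)[OF G4_perm, of \<sigma> k] exhaust_4[of "inv \<sigma> k"] by metis

lemma G4_inj: "\<sigma> \<in> G4 \<Longrightarrow> \<sigma> i = \<sigma> j \<Longrightarrow> i = j"
  using permutes_inj[OF G4_perm] by (metis injD)

lemma sort4_uniq:
  fixes f :: "4 \<Rightarrow> real"
  assumes inj: "inj f" and s: "\<sigma> \<in> G4" and t: "\<tau> \<in> G4"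
    and fs: "f (\<sigma> 1) > f (\<sigma> 2)" "f (\<sigma> 2) > f (\<sigma> 3)" "f (\<sigma> 3) > f (\<sigma> 4)"
    and ft: "f (\<tau> 1) > f (\<tau> 2)" "f (\<tau> 2) > f (\<tau> 3)" "f (\<tau> 3) > f (\<tau> 4)"
  shows "\<sigma> = \<tau>"
proof -
  have s1: "f k \<le> f (\<sigma> 1)" for k using G4_cover[OF s, of k] fs by auto
  have t1: "f k \<le> f (\<tau> 1)" for k using G4_cover[OF t, of k] ft by auto
  have s4: "f (\<sigma> 4) \<le> f k" for k using G4_cover[OF s, of k] fs by auto
  have t4: "f (\<tau> 4) \<le> f k" for k using G4_cover[OF t, of k] ft by auto
  have s2: "k \<noteq> \<sigma> 1 \<Longrightarrow> f k \<le> f (\<sigma> 2)" for k using G4_cover[OF s, of k] fs by auto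
  have t2: "k \<noteq> \<tau> 1 \<Longrightarrow> f k \<le> f (\<tau> 2)" for k using G4_cover[OF t, of k] ft by auto
  have h1: "\<sigma> 1 = \<tau> 1" using s1[of "\<tau> 1"] t1[of "\<sigma> 1"] inj by (simp add: injD order_antisym)
  have h4: "\<sigma> 4 = \<tau> 4" using s4[of "\<tau> 4"] t4[of "\<sigma> 4"] inj by (simp add: injD order_antisym)
  have n21: "\<sigma> 2 \<noteq> \<sigma> 1" "\<tau> 2 \<noteq> \<tau> 1" using G4_inj[OF s, of 2 1] G4_inj[OF t, of 2 1] by auto
  have h2: "\<sigma> 2 = \<tau> 2" using s2[of "\<tau> 2"] t2[of "\<sigma> 2"] h1 n21 inj
    by (metis injD order_antisym)
  have "\<sigma> 3 \<noteq> \<tau> 1" "\<sigma> 3 \<noteq> \<tau> 2" "\<sigma> 3 \<noteq> \<tau> 4"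
    using G4_inj[OF s, of 3 1] G4_inj[OF s, of 3 2] G4_inj[OF s, of 3 4] h1 h2 h4 by auto
  then have h3: "\<sigma> 3 = \<tau> 3" using G4_cover[OF t, of "\<sigma> 3"] by auto
  show ?thesis
  proof
    fix i show "\<sigma> i = \<tau> i" using exhaust_4[of i] h1 h2 h3 h4 by auto
  qed
qed

definition wv :: "4 \<Rightarrow> real^3" where "wv m = (\<chi> i. embH (axis i 1) $ m)"

lemma wv_inner: "wv m \<bullet> x = embH x $ m"
  using exhaust_4[of m]
  by (auto simp: wv_def inner_vec_def sum_3 axis_def)

lemma embH_1247: "embH (vector [1,2,4]) $ m \<in> {1,2,4,-7}"
  using exhaust_4[of m] by auto

lemma wv_ne0: "wv m \<noteq> 0"
proof
  assume "wv m = 0"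
  then have "embH (vector [1,2,4]) $ m = 0" by (metis inner_zero_left wv_inner)
  then show False using exhaust_4[of m] by auto
qed

lemma wv_ne: "m \<noteq> m' \<Longrightarrow> wv m - wv m' \<noteq> 0"
proof
  assume "m \<noteq> m'" "wv m - wv m' = 0"
  then have "embH (vector [1,2,4]) $ m = embH (vector [1,2,4]) $ m'" by (metis eq_iff_diff_eq_0 wv_inner)
  then show False using exhaust_4[of m] exhaust_4[of m'] \<open>m \<noteq> m'\<close> by auto
qed

lemma wv_ne2: "m \<noteq> m' \<Longrightarrow> wv m \<noteq> wv m'"
  using wv_ne by force

definition N1 :: "(real^3) set" where
  "N1 = {x. \<exists>m m'. m \<noteq> m' \<and> embH x $ m - embH x $ m' \<in> \<int>} \<union> {x. \<exists>m. embH x $ m \<in> \<int>}"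

lemma negl_N1: "negligible N1"
proof -
  have "N1 = \<Union> ((\<lambda>(m,m'). {x. (wv m - wv m') \<bullet> x \<in> \<int>}) ` {(m,m'). m \<noteq> m'})
            \<union> \<Union> ((\<lambda>m. {x. wv m \<bullet> x \<in> \<int>}) ` UNIV)"
    by (auto simp: N1_def inner_diff_left wv_inner)
  also have "negligible \<dots>"
    by (intro negligible_Un negligible_Union) (auto intro!: negl_lin simp: wv_ne2 wv_ne0)
  finally show ?thesis .
qed

lemma int_pos: assumes "z \<in> \<int>" "0 < z" shows "1 \<le> (z::real)"
proof -
  obtain n where n: "z = of_int n" using assms(1) Ints_cases by blast
  then have "0 < n" using assms(2) by simp
  then have "1 \<le> n" by simp
  then show ?thesis using n by simp
qed

lemma embH_add_intv:
  assumes "x \<notin> N1" "intv p"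
  shows "m \<noteq> m' \<Longrightarrow> embH (x + p) $ m - embH (x + p) $ m' \<notin> \<int>"
proof
  assume mm: "m \<noteq> m'" and "embH (x + p) $ m - embH (x + p) $ m' \<in> \<int>"
  moreover have "embH (x + p) $ m - embH (x + p) $ m' = (embH x $ m - embH x $ m') + (embH p $ m - embH p $ m')"
    by (simp add: embH_add)
  moreover have "embH p $ m - embH p $ m' \<in> \<int>" using embH_Ints[OF assms(2)] by auto
  ultimately have "embH x $ m - embH x $ m' \<in> \<int>" by (metis Ints_diff add_diff_cancel)
  then show False using assms(1) mm by (auto simp: N1_def)
qed

lemma inj_u: assumes "x \<notin> N1" "intv p" shows "inj (\<lambda>m. embH (x + p) $ m)"
proof (rule injI)
  fix m m' assume "embH (x + p) $ m = embH (x + p) $ m'"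
  then show "m = m'" using embH_add_intv[OF assms, of m m'] by auto
qed

lemma mem_D_Pm:
  assumes "\<sigma> \<in> G4"
  shows "Pm \<sigma> z \<in> triH_param \<longleftrightarrow>
    (let u = embH z in u $ \<sigma> 1 - u $ \<sigma> 2 \<in> {0..1} \<and> u $ \<sigma> 2 - u $ \<sigma> 3 \<in> {0..1} \<and>
      u $ \<sigma> 3 - u $ \<sigma> 4 \<in> {0..1} \<and> u $ \<sigma> 1 - u $ \<sigma> 4 \<in> {0..1})"
proof -
  have "(\<Sum>i\<in>UNIV. pvec (embH z) \<sigma> $ i) = 0"
    using sum_pvec[OF G4_perm[OF assms], of "embH z"] sum_embH by simp
  have "Pm \<sigma> z \<in> triH_param \<longleftrightarrow> embH (Pm \<sigma> z) \<in> triH" by (simp add: triH_param_def)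
  also have "\<dots> \<longleftrightarrow> pvec (embH z) \<sigma> \<in> triH" by (simp only: embH_Pm[OF assms])
  finally show ?thesis using \<open>(\<Sum>i\<in>UNIV. pvec (embH z) \<sigma> $ i) = 0\<close>
    by (simp add: triH_def Let_def)
qed




lemma finite_G4: "finite G4"
  unfolding G4_def by (rule finite_permutations) simp

lemma card_G4: "card G4 = 24"
  unfolding G4_def by (simp add: card_permutations numeral_eq_Suc)

lemma D_eq: "triH_param = {x. 0 \<le> x$1 - x$2 \<and> x$1 - x$2 \<le> 1 \<and> 0 \<le> x$2 - x$3 \<and> x$2 - x$3 \<le> 1 \<and>
   0 \<le> x$3 + (x$1+x$2+x$3) \<and> x$3 + (x$1+x$2+x$3) \<le> 1 \<and>
   0 \<le> x$1 + (x$1+x$2+x$3) \<and> x$1 + (x$1+x$2+x$3) \<le> 1}"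
  by (auto simp: triH_param_def triH_def sum_4)

lemma D_bound: "x \<in> triH_param \<Longrightarrow> \<bar>embH x $ m\<bar> \<le> 3/4"
  using exhaust_4[of m] unfolding D_eq by auto

lemma compact_D: "compact triH_param"
proof -
  have "closed triH_param"
    unfolding D_eq by (intro closed_Collect_conj closed_Collect_le continuous_intros)
  moreover have "triH_param \<subseteq> cbox (-1) 1"
  proof
    fix x assume x: "x \<in> triH_param"
    have b: "-1 \<le> x $ i \<and> x $ i \<le> 1" for i
    proof -
      have "\<bar>x $ i\<bar> \<le> 3/4" using D_bound[OF x, of 1] D_bound[OF x, of 2] D_bound[OF x, of 3]
        exhaust_3[of i] by auto
      then show ?thesis using abs_le_iff[of "x$i" "3/4"] by linarith
    qed
    then show "x \<in> cbox (-1) 1" by (simp add: mem_box_cart)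
  qed
  then have "bounded triH_param" using bounded_cbox bounded_subset by blast
  ultimately show ?thesis using compact_eq_bounded_closed by blast
qed

definition E :: "(4 \<Rightarrow> 4) \<Rightarrow> (real^3) set" where "E \<sigma> = {z. Pm \<sigma> z \<in> triH_param}"

lemma E_img: "\<sigma> \<in> G4 \<Longrightarrow> E \<sigma> = Pm (inv \<sigma>) ` triH_param"
  unfolding E_def
  by (auto simp: image_iff Pm_inv1 Pm_inv2) (metis Pm_inv1)

lemma compact_E: "\<sigma> \<in> G4 \<Longrightarrow> compact (E \<sigma>)"
  unfolding E_img
  by (rule compact_continuous_image[OF linear_continuous_on compact_D])
     (simp add: linear_Pm linear_linear)

lemma E_bound: "\<sigma> \<in> G4 \<Longrightarrow> z \<in> E \<sigma> \<Longrightarrow> -1 \<le> z $ i \<and> z $ i \<le> 2"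
proof -
  assume s: "\<sigma> \<in> G4" and z: "z \<in> E \<sigma>"
  then obtain y where y: "y \<in> triH_param" "z = Pm (inv \<sigma>) y" by (auto simp: E_img)
  obtain m where "Pm (inv \<sigma>) y $ i = embH y $ m" using Pm_nth_ex by blast
  then show ?thesis using D_bound[OF y(1), of m] y(2) by auto
qed

lemma alc_facts:
  assumes x: "x \<notin> N1" and s: "\<sigma> \<in> G4" and p: "intv p" and D: "Pm \<sigma> (x + p) \<in> triH_param"
  shows "\<And>m m'. m \<noteq> m' \<Longrightarrow> embH (x + p) $ m - embH (x + p) $ m' < 1"
    and "embH (x + p) $ \<sigma> 1 > embH (x + p) $ \<sigma> 2" "embH (x + p) $ \<sigma> 2 > embH (x + p) $ \<sigma> 3"
        "embH (x + p) $ \<sigma> 3 > embH (x + p) $ \<sigma> 4"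
proof -
  define u where "u m = embH (x + p) $ m" for m
  have w: "u (\<sigma> 2) \<le> u (\<sigma> 1)" "u (\<sigma> 3) \<le> u (\<sigma> 2)" "u (\<sigma> 4) \<le> u (\<sigma> 3)" "u (\<sigma> 1) - u (\<sigma> 4) \<le> 1"
    using D unfolding mem_D_Pm[OF s] by (auto simp: u_def Let_def)
  have bd: "u (\<sigma> 4) \<le> u m \<and> u m \<le> u (\<sigma> 1)" for m using G4_cover[OF s, of m] w by auto
  have inj: "inj u" using inj_u[OF x p] unfolding u_def[abs_def] by simp
  show "embH (x + p) $ m - embH (x + p) $ m' < 1" if "m \<noteq> m'" for m m'
  proof -
    have "u m - u m' \<le> 1" using bd[of m] bd[of m'] w by auto
    moreover have "u m - u m' \<noteq> 1" using embH_add_intv[OF x p that] by (auto simp: u_def)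
    ultimately show ?thesis by (simp add: u_def)
  qed
  have ne: "\<sigma> 1 \<noteq> \<sigma> 2" "\<sigma> 2 \<noteq> \<sigma> 3" "\<sigma> 3 \<noteq> \<sigma> 4"
    using G4_inj[OF s, of 1 2] G4_inj[OF s, of 2 3] G4_inj[OF s, of 3 4] by auto
  show "embH (x + p) $ \<sigma> 1 > embH (x + p) $ \<sigma> 2" "embH (x + p) $ \<sigma> 2 > embH (x + p) $ \<sigma> 3"
        "embH (x + p) $ \<sigma> 3 > embH (x + p) $ \<sigma> 4"
    using w ne inj unfolding u_def by (metis injD order_le_neq_trans)+
qed

lemma alcove_uniq:
  assumes x: "x \<notin> N1" and s: "\<sigma> \<in> G4" "\<sigma>' \<in> G4" and p: "intv p" "intv p'"
   and D: "Pm \<sigma> (x + p) \<in> triH_param" "Pm \<sigma>' (x + p') \<in> triH_param"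
  shows "\<sigma> = \<sigma>' \<and> p = p'"
proof -
  define u where "u m = embH (x + p) $ m" for m
  define u' where "u' m = embH (x + p') $ m" for m
  define l where "l m = embH (p' - p) $ m" for m
  have e: "x + p' = (x + p) + (p' - p)" by (simp add: algebra_simps)
  have ul: "u' m = u m + l m" for m unfolding u_def u'_def l_def
    by (subst e, simp only: embH_add vector_add_component)
  have lint: "l m \<in> \<int>" for m
    unfolding l_def by (rule embH_Ints) (use p in \<open>auto simp: intv_def\<close>)
  have lsum: "l 1 + l 2 + l 3 + l 4 = 0" using sum_embH[of "p' - p"] by (simp add: l_def sum_4)
  have r1: "m \<noteq> m' \<Longrightarrow> u m - u m' < 1" for m m' using alc_facts(1)[OF x s(1) p(1) D(1)] by (simp add: u_def)
  have r2: "m \<noteq> m' \<Longrightarrow> u' m - u' m' < 1" for m m' using alc_facts(1)[OF x s(2) p(2) D(2)] by (simp add: u'_def)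
  have pp: "p = p'"
  proof (rule ccontr)
    assume "p \<noteq> p'"
    then obtain i where "p' $ i - p $ i \<noteq> 0" by (metis eq_iff_diff_eq_0 vec_eq_iff)
    then have "\<exists>m. l m \<noteq> 0" using exhaust_3[of i] unfolding l_def by (metis embH_nth(1-3) vector_minus_component)
    then obtain m0 where m0: "l m0 \<noteq> 0" by blast
    have all4: "\<forall>m. P m" if "P 1" "P 2" "P 3" "P 4" for P :: "4 \<Rightarrow> bool" using that forall_4 by blast
    have "\<exists>m. 0 < l m"
    proof (rule ccontr)
      assume "\<not> (\<exists>m. 0 < l m)"
      then have "l 1 \<le> 0" "l 2 \<le> 0" "l 3 \<le> 0" "l 4 \<le> 0" by (auto simp: not_less)
      then have "l 1 = 0" "l 2 = 0" "l 3 = 0" "l 4 = 0" using lsum by linarith+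
      then have "\<forall>m. l m = 0" by (intro all4)
      then show False using m0 by simp
    qed
    then obtain m where m: "1 \<le> l m" using int_pos lint by blast
    have "\<exists>m. l m < 0"
    proof (rule ccontr)
      assume "\<not> (\<exists>m. l m < 0)"
      then have "l 1 \<ge> 0" "l 2 \<ge> 0" "l 3 \<ge> 0" "l 4 \<ge> 0" by (auto simp: not_less)
      then have "l 1 = 0" "l 2 = 0" "l 3 = 0" "l 4 = 0" using lsum by linarith+
      then have "\<forall>m. l m = 0" by (intro all4)
      then show False using m0 by simp
    qed
    then obtain m' where m': "1 \<le> - l m'" using int_pos lint by (metis Ints_minus neg_0_less_iff_less)
    have mm: "m \<noteq> m'" using m m' by auto
    have "u m' - u m < 1" using r1[of m' m] mm by auto
    moreover have "u' m - u' m' < 1" using r2 mm by auto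
    ultimately show False using ul[of m] ul[of m'] m m' by linarith
  qed
  have inj: "inj u" using inj_u[OF x p(1)] unfolding u_def[abs_def] by simp
  have "\<sigma> = \<sigma>'"
    by (rule sort4_uniq[OF inj s])
       (use alc_facts(2-4)[OF x s(1) p(1) D(1)] alc_facts(2-4)[OF x s(2) p(2) D(2)] pp in \<open>simp_all add: u_def\<close>)
  then show ?thesis using pp by simp
qed




lemma alcove_ex:
  assumes xC: "x \<in> C" and x: "x \<notin> N1"
  shows "\<exists>\<sigma>\<in>G4. \<exists>p\<in>B. Pm \<sigma> (x + p) \<in> triH_param"
proof -
  define t where "t = embH x"
  have tn: "t $ m \<notin> \<int>" for m using x by (auto simp: N1_def t_def)
  define f where "f m = t $ m - of_int \<lfloor>t $ m\<rfloor>" for m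
  have f01: "0 < f m \<and> f m < 1" for m
  proof -
    have "f m \<noteq> 0"
    proof
      assume "f m = 0"
      then have "t $ m = of_int \<lfloor>t $ m\<rfloor>" by (simp add: f_def)
      then have "t $ m \<in> \<int>" by (metis Ints_of_int)
      then show False using tn by blast
    qed
    moreover have "0 \<le> f m" "f m < 1"
      using of_int_floor_le[of "t$m"] real_of_int_floor_add_one_gt[of "t$m"] unfolding f_def by linarith+
    ultimately show ?thesis by auto
  qed
  have finj: "inj f"
  proof (rule injI)
    fix m m' assume "f m = f m'"
    then have "t $ m - t $ m' = of_int (\<lfloor>t $ m\<rfloor> - \<lfloor>t $ m'\<rfloor>)" by (simp add: f_def)
    then have "t $ m - t $ m' \<in> \<int>" by simp
    then show "m = m'" using x by (auto simp: N1_def t_def)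
  qed
  have xi: "0 < x $ i \<and> x $ i < 1" for i
  proof -
    have "x $ i \<notin> \<int>" using tn[of 1] tn[of 2] tn[of 3] exhaust_3[of i] by (auto simp: t_def)
    then have "x $ i \<noteq> 0" "x $ i \<noteq> 1" by (metis Ints_0, metis Ints_1)
    then show ?thesis using xC by (auto simp: mem_C) (metis order_le_less)+
  qed
  have fx: "f 1 = x $ 1" "f 2 = x $ 2" "f 3 = x $ 3"
  proof -
    have "\<lfloor>x $ i\<rfloor> = 0" for i using xi[of i] by (simp add: floor_eq_iff)
    then show "f 1 = x $ 1" "f 2 = x $ 2" "f 3 = x $ 3" by (simp_all add: f_def t_def)
  qed
  define r where "r = - \<lfloor>t $ 4\<rfloor>"
  have t4: "t $ 4 = - (x$1 + x$2 + x$3)" by (simp add: t_def)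
  have r: "r = 1 \<or> r = 2 \<or> r = 3"
  proof -
    have "-3 < t $ 4" "t $ 4 < 0" using xi[of 1] xi[of 2] xi[of 3] t4 by auto
    then have "-3 \<le> \<lfloor>t $ 4\<rfloor>" "\<lfloor>t $ 4\<rfloor> \<le> -1" by (simp_all add: le_floor_iff floor_le_iff)
    then show ?thesis unfolding r_def by arith
  qed
  have f4: "f 4 = t $ 4 + of_int r" by (simp add: f_def r_def)
  obtain a b c d where abcd: "distinct [a,b,c,d]" "f a > f b" "f b > f c" "f c > f d"
    using sortabcd[OF finj] by blast
  have U: "UNIV = {a,b,c,d}" using univ4[OF abcd(1)] .
  define \<theta> where "\<theta> = (if r = 1 then f a else if r = 2 then f b else f c)"
  define q where "q m = (if \<theta> \<le> f m then 1 else 0::real)" for m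
  have sq: "q 1 + q 2 + q 3 + q 4 = of_int r"
  proof -
    have "q 1 + q 2 + q 3 + q 4 = sum q UNIV" by (simp add: sum_4)
    also have "\<dots> = q a + q b + q c + q d" unfolding U using abcd(1) by (simp add: algebra_simps)
    also have "\<dots> = of_int r" using r abcd by (auto simp: q_def \<theta>_def)
    finally show ?thesis .
  qed
  define p :: "real^3" where "p = vector [- q 1, - q 2, - q 3]"
  have q01: "q m = 0 \<or> q m = 1" for m by (simp add: q_def)
  have pB: "p \<in> B"
    unfolding B_def p_def using q01[of 1] q01[of 2] q01[of 3] by (auto simp: forall_3 vector_3)
  have pint: "intv p" using B_intv[OF pB] .
  have u1: "embH (x + p) $ 1 = f 1 - q 1" by (simp add: p_def fx)
  have u2: "embH (x + p) $ 2 = f 2 - q 2" by (simp add: p_def fx)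
  have u3: "embH (x + p) $ 3 = f 3 - q 3" by (simp add: p_def fx)
  have u4: "embH (x + p) $ 4 = f 4 - q 4"
  proof -
    have "embH (x + p) $ 4 = t $ 4 + (q 1 + q 2 + q 3)" by (simp add: p_def t4)
    then show ?thesis using sq f4 by simp
  qed
  have u: "embH (x + p) $ m = f m - q m" for m using exhaust_4[of m] u1 u2 u3 u4 by auto
  have th01: "0 < \<theta> \<and> \<theta> < 1" using f01 by (simp add: \<theta>_def)
  have urange: "\<theta> - 1 \<le> embH (x + p) $ m \<and> embH (x + p) $ m < \<theta>" for m
    using f01[of m] th01 unfolding u by (auto simp: q_def)
  obtain \<sigma> where s: "\<sigma> \<in> G4" and srt: "embH (x + p) $ \<sigma> 1 > embH (x + p) $ \<sigma> 2"
    "embH (x + p) $ \<sigma> 2 > embH (x + p) $ \<sigma> 3" "embH (x + p) $ \<sigma> 3 > embH (x + p) $ \<sigma> 4"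
    using sort4_ex[OF inj_u[OF x pint]] by blast
  have "Pm \<sigma> (x + p) \<in> triH_param"
    unfolding mem_D_Pm[OF s] Let_def
    using srt urange[of "\<sigma> 1"] urange[of "\<sigma> 2"] urange[of "\<sigma> 3"] urange[of "\<sigma> 4"] by auto
  then show ?thesis using s pB by blast
qed

lemma alcove_count:
  assumes xC: "x \<in> C" and x: "x \<notin> N1"
  shows "(\<Sum>\<sigma>\<in>G4. \<Sum>p\<in>B. if Pm \<sigma> (x + p) \<in> triH_param then (y::complex) else 0) = y"
proof -
  obtain \<sigma>0 p0 where s0: "\<sigma>0 \<in> G4" "p0 \<in> B" "Pm \<sigma>0 (x + p0) \<in> triH_param"
    using alcove_ex[OF xC x] by blast
  have iff: "Pm \<sigma> (x + p) \<in> triH_param \<longleftrightarrow> \<sigma> = \<sigma>0 \<and> p = p0" if "\<sigma> \<in> G4" "p \<in> B" for \<sigma> p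
    using alcove_uniq[OF x that(1) s0(1) B_intv[OF that(2)] B_intv[OF s0(2)] _ s0(3)] s0(3) by blast
  have "(\<Sum>\<sigma>\<in>G4. \<Sum>p\<in>B. if Pm \<sigma> (x + p) \<in> triH_param then y else 0)
      = (\<Sum>\<sigma>\<in>G4. \<Sum>p\<in>B. if \<sigma> = \<sigma>0 then (if p = p0 then y else 0) else 0)"
    by (intro sum.cong refl) (simp add: iff)
  also have "\<dots> = (\<Sum>\<sigma>\<in>G4. if \<sigma> = \<sigma>0 then y else 0)"
    by (intro sum.cong refl, cases "\<sigma> = \<sigma>0") (simp_all add: s0(2) finite_B)
  also have "\<dots> = y" using s0(1) finite_G4 by simp
  finally show ?thesis .
qed




lemma compact_piece: "\<sigma> \<in> G4 \<Longrightarrow> compact {x. x \<in> C \<and> x + p \<in> E \<sigma>}"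
proof -
  assume s: "\<sigma> \<in> G4"
  have e: "{x. x \<in> C \<and> x + p \<in> E \<sigma>} = C \<inter> ((+) (-p) ` E \<sigma>)"
    by (auto simp: image_iff) (metis add.commute add_diff_cancel_left' diff_minus_eq_add minus_minus uminus_add_conv_diff)
  have "compact ((+) (-p) ` E \<sigma>)" using compact_E[OF s] by (rule compact_translation)
  then show ?thesis unfolding e using compact_C by (simp add: compact_Int_closed compact_imp_closed)
qed

lemma int_E:
  fixes G :: "real^3 \<Rightarrow> complex"
  assumes cont: "continuous_on UNIV G" and inv: "\<And>\<sigma> x. \<sigma> \<in> G4 \<Longrightarrow> G (Pm \<sigma> x) = G x"
    and s: "\<sigma> \<in> G4"
  shows "integral (E \<sigma>) G = integral triH_param G"
proof -
  define f where "f y = (if y \<in> triH_param then G y else 0)" for y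
  have fa: "f absolutely_integrable_on UNIV" unfolding f_def by (rule AIU[OF compact_D cont])
  have "integral (E \<sigma>) G = integral UNIV (\<lambda>z. if z \<in> E \<sigma> then G z else 0)"
    by (simp add: Henstock_Kurzweil_Integration.integral_restrict_UNIV)
  also have "\<dots> = integral UNIV (\<lambda>z. f (Pm \<sigma> z))"
    by (rule arg_cong[of _ _ "integral UNIV"], rule ext) (simp add: f_def E_def inv[OF s])
  also have "\<dots> = integral UNIV f"
    using cov_UNIV[of "Pm \<sigma>" "Pm \<sigma>" 0 f] linear_Pm det_Pm[OF s] bij_Pm[OF s] fa by simp
  also have "\<dots> = integral triH_param G"
    by (simp add: f_def[abs_def] Henstock_Kurzweil_Integration.integral_restrict_UNIV)
  finally show ?thesis .
qed

lemma main_int: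
  fixes G :: "real^3 \<Rightarrow> complex"
  assumes cont: "continuous_on UNIV G" and per: "periodic G"
    and inv: "\<And>\<sigma> x. \<sigma> \<in> G4 \<Longrightarrow> G (Pm \<sigma> x) = G x"
  shows "integral C G = 24 * integral triH_param G"
proof -
  have intg: "(\<lambda>x. if x \<in> C \<and> x + p \<in> E \<sigma> then G x else 0) integrable_on UNIV" if "\<sigma> \<in> G4" for \<sigma> p
    using AIU_int[OF compact_piece[OF that, of p] cont] by simp
  have "integral C G = integral UNIV (\<lambda>x. if x \<in> C then G x else 0)"
    by (simp add: Henstock_Kurzweil_Integration.integral_restrict_UNIV)
  also have "\<dots> = integral UNIV (\<lambda>x. \<Sum>\<sigma>\<in>G4. \<Sum>p\<in>B. if x \<in> C \<and> x + p \<in> E \<sigma> then G x else 0)"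
  proof (rule integral_spike[OF negl_N1])
    fix x assume x: "x \<in> UNIV - N1"
    show "(\<Sum>\<sigma>\<in>G4. \<Sum>p\<in>B. if x \<in> C \<and> x + p \<in> E \<sigma> then G x else 0) = (if x \<in> C then G x else 0)"
    proof (cases "x \<in> C")
      case True
      then show ?thesis using alcove_count[OF True, of "G x"] x by (simp add: E_def)
    qed simp
  qed
  also have "\<dots> = (\<Sum>\<sigma>\<in>G4. integral UNIV (\<lambda>x. \<Sum>p\<in>B. if x \<in> C \<and> x + p \<in> E \<sigma> then G x else 0))"
    by (rule integral_sum[OF finite_G4])
       (intro Henstock_Kurzweil_Integration.integrable_sum finite_B intg)
  also have "\<dots> = (\<Sum>\<sigma>\<in>G4. \<Sum>p\<in>B. integral UNIV (\<lambda>x. if x \<in> C \<and> x + p \<in> E \<sigma> then G x else 0))"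
    by (intro sum.cong refl integral_sum finite_B intg)
  also have "\<dots> = (\<Sum>\<sigma>\<in>G4. integral (E \<sigma>) G)"
    by (intro sum.cong refl L4[symmetric] cont per compact_E) (auto dest: E_bound)
  also have "\<dots> = (\<Sum>\<sigma>\<in>G4. integral triH_param G)"
    by (intro sum.cong refl int_E cont inv) auto
  also have "\<dots> = 24 * integral triH_param G" by (simp add: card_G4)
  finally show ?thesis .
qed

lemma measure_D: "measure lebesgue triH_param = 1/24"
proof -
  have "integral C (\<lambda>x. 1::complex) = 24 * integral triH_param (\<lambda>x. 1::complex)"
    by (rule main_int) (auto simp: periodic_def)
  moreover have "integral C (\<lambda>x. 1::complex) = 1"
  proof -
    have "(0::real^3) \<in> cbox 0 1" by (simp add: mem_box_cart)
    then have ne: "cbox (0::real^3) 1 \<noteq> {}" by blast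
    show ?thesis by (simp add: C_def content_cbox_cart[OF ne])
  qed
  moreover have "integral triH_param (\<lambda>x. 1::complex) = of_real (measure lebesgue triH_param)"
  proof -
    have i1: "(\<lambda>x. 1::real) integrable_on triH_param"
      by (rule integrable_on_const[OF lmeasurable_compact[OF compact_D]])
    have "integral triH_param ((\<lambda>r. of_real r :: complex) \<circ> (\<lambda>x. 1::real)) = of_real (integral triH_param (\<lambda>x. 1::real))"
      by (rule integral_linear[OF i1 bounded_linear_of_real])
    then have "integral triH_param (\<lambda>x. 1::complex) = of_real (integral triH_param (\<lambda>x. 1::real))"
      by (simp add: o_def)
    then show ?thesis using lmeasure_integral[OF lmeasurable_compact[OF compact_D]] by simp
  qed
  ultimately have "complex_of_real (24 * measure lebesgue triH_param) = complex_of_real 1" by simp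
  then have "24 * measure lebesgue triH_param = 1" using of_real_eq_iff by blast
  then show ?thesis by simp
qed

lemma ipH_eq:
  fixes F1 F2 :: "real^4 \<Rightarrow> complex"
  assumes cont: "continuous_on UNIV (\<lambda>x. F1 (embH x) * cnj (F2 (embH x)))"
    and per: "periodic (\<lambda>x. F1 (embH x) * cnj (F2 (embH x)))"
    and inv: "\<And>\<sigma> x. \<sigma> \<in> G4 \<Longrightarrow> F1 (embH (Pm \<sigma> x)) * cnj (F2 (embH (Pm \<sigma> x))) = F1 (embH x) * cnj (F2 (embH x))"
  shows "ipH F1 F2 = integral C (\<lambda>x. F1 (embH x) * cnj (F2 (embH x)))"
  by (simp add: ipH_def measure_D main_int[OF cont per inv] field_simps)




lemma negl_lin2: fixes a :: "real^3" assumes "a \<noteq> 0" shows "negligible {x. a \<bullet> x - b \<in> \<int>}"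
proof -
  have "{x. a \<bullet> x - b \<in> \<int>} = \<Union> ((\<lambda>n::int. {x. a \<bullet> x = of_int n + b}) ` UNIV)"
    by (auto simp: Ints_def)
  also have "negligible \<dots>"
    by (rule negligible_countable_Union) (auto intro: negligible_hyperplane simp: assms)
  finally show ?thesis .
qed

definition Nv :: "real^3 \<Rightarrow> (real^3) set" where "Nv v = {x. \<exists>j. x $ j - v $ j \<in> \<int>}"

lemma negl_Nv: "negligible (Nv v)"
proof -
  have "Nv v = \<Union> ((\<lambda>j. {x. axis j 1 \<bullet> x - v $ j \<in> \<int>}) ` UNIV)"
    by (auto simp: Nv_def axis_inner)
  also have "negligible \<dots>"
    by (rule negligible_Union) (auto intro!: negl_lin2 simp: axis_eq_0_iff)
  finally show ?thesis .
qed

lemma int_C_one: "integral C (\<lambda>x. 1::complex) = 1"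
proof -
  have "(0::real^3) \<in> cbox 0 1" by (simp add: mem_box_cart)
  then have ne: "cbox (0::real^3) 1 \<noteq> {}" by blast
  show ?thesis by (simp add: C_def content_cbox_cart[OF ne])
qed

lemma transl_C:
  fixes g :: "real^3 \<Rightarrow> complex"
  assumes cont: "continuous_on UNIV g" and per: "periodic g" and v: "\<And>j. 0 \<le> v $ j \<and> v $ j \<le> 1"
  shows "integral C (\<lambda>x. g (x + v)) = integral C g"
proof -
  define S where "S = {z. z - v \<in> C}"
  have S_eq: "S = (+) v ` C" by (auto simp: S_def image_iff) (metis add.commute diff_add_cancel)
  have cS: "compact S" unfolding S_eq by (rule compact_translation[OF compact_C])
  have pc: "compact {x. x \<in> C \<and> x + p \<in> S}" for p
  proof -
    have "{x. x \<in> C \<and> x + p \<in> S} = C \<inter> ((+) (-p) ` S)"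
      by (auto simp: image_iff) (metis add.commute add_diff_cancel_left' diff_minus_eq_add minus_minus uminus_add_conv_diff)
    moreover have "compact ((+) (-p) ` S)" by (rule compact_translation[OF cS])
    ultimately show ?thesis using compact_C by (simp add: compact_Int_closed compact_imp_closed)
  qed
  have "integral C (\<lambda>x. g (x + v)) = integral UNIV (\<lambda>x. if x \<in> C then g (x + v) else 0)"
    by (simp add: Henstock_Kurzweil_Integration.integral_restrict_UNIV)
  also have "\<dots> = integral UNIV (\<lambda>x. (\<lambda>z. if z \<in> S then g z else 0) (x + v))"
    by (simp add: S_def)
  also have "\<dots> = integral UNIV (\<lambda>z. if z \<in> S then g z else 0)"
    by (rule transl_UNIV) (rule AIU[OF cS cont])
  also have "\<dots> = integral S g"
    by (simp add: Henstock_Kurzweil_Integration.integral_restrict_UNIV)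
  also have "\<dots> = (\<Sum>p\<in>B. integral UNIV (\<lambda>x. if x \<in> C \<and> x + p \<in> S then g x else 0))"
  proof (rule L4[OF cont per cS])
    fix z i assume "z \<in> S"
    then have "0 \<le> z $ i - v $ i \<and> z $ i - v $ i \<le> 1" by (auto simp: S_def mem_C)
    then show "-1 \<le> z $ i \<and> z $ i \<le> 2" using v[of i] by auto
  qed
  also have "\<dots> = integral UNIV (\<lambda>x. \<Sum>p\<in>B. if x \<in> C \<and> x + p \<in> S then g x else 0)"
    by (rule integral_sum[symmetric, OF finite_B]) (use AIU_int[OF pc cont] in simp)
  also have "\<dots> = integral UNIV (\<lambda>x. if x \<in> C then g x else 0)"
  proof (rule integral_spike[OF negl_Nv[of v]])
    fix x assume x: "x \<in> UNIV - Nv v"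
    show "(if x \<in> C then g x else 0) = (\<Sum>p\<in>B. if x \<in> C \<and> x + p \<in> S then g x else 0)"
    proof (cases "x \<in> C")
      case False then show ?thesis by simp
    next
      case True
      have xj: "x $ j - v $ j \<notin> \<int>" for j using x by (auto simp: Nv_def)
      define pf :: "real^3" where "pf = (\<chi> j. - of_int \<lfloor>x $ j - v $ j\<rfloor>)"
      have pfB: "pf \<in> B"
      proof -
        have "- of_int \<lfloor>x $ j - v $ j\<rfloor> \<in> {-1, 0, 1::real}" for j
        proof -
          have "0 \<le> x $ j \<and> x $ j \<le> 1" using True by (simp add: mem_C)
          then have "-1 \<le> x $ j - v $ j" "x $ j - v $ j \<le> 1" using v[of j] by auto
          moreover have "x $ j - v $ j \<noteq> 1" using xj[of j] by (metis Ints_1)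
          ultimately have "-1 \<le> \<lfloor>x $ j - v $ j\<rfloor>" "\<lfloor>x $ j - v $ j\<rfloor> \<le> 0"
            by (simp_all add: le_floor_iff floor_le_iff)
          then have "\<lfloor>x $ j - v $ j\<rfloor> = -1 \<or> \<lfloor>x $ j - v $ j\<rfloor> = 0" by arith
          then show ?thesis by auto
        qed
        then show ?thesis by (simp add: B_def pf_def)
      qed
      have eq: "x + p \<in> S \<longleftrightarrow> p = pf" if "p \<in> B" for p
      proof -
        have "x + p \<in> S \<longleftrightarrow> (\<forall>j. 0 \<le> (x $ j - v $ j) - (- p $ j) \<and> (x $ j - v $ j) - (- p $ j) \<le> 1)"
          by (simp add: S_def mem_C algebra_simps)
        also have "\<dots> \<longleftrightarrow> (\<forall>j. - p $ j = of_int \<lfloor>x $ j - v $ j\<rfloor>)"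
        proof -
          have fj: "(0 \<le> (x $ j - v $ j) - (- p $ j) \<and> (x $ j - v $ j) - (- p $ j) \<le> 1) \<longleftrightarrow>
                    (- p $ j = of_int \<lfloor>x $ j - v $ j\<rfloor>)" for j
            by (rule floor_char[OF _ xj]) (use B_intv[OF that] in \<open>simp add: intv_def\<close>)
          show ?thesis by (simp only: fj)
        qed
        also have "\<dots> \<longleftrightarrow> p = pf" by (simp add: pf_def vec_eq_iff) (metis equation_minus_iff)
        finally show ?thesis .
      qed
      have "(\<Sum>p\<in>B. if x \<in> C \<and> x + p \<in> S then g x else 0) = (\<Sum>p\<in>B. if p = pf then g x else 0)"
        by (rule sum.cong) (use eq True in auto)
      also have "\<dots> = g x" using pfB finite_B by simp
      finally show ?thesis using True by simp
    qed
  qed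
  also have "\<dots> = integral C g"
    by (simp add: Henstock_Kurzweil_Integration.integral_restrict_UNIV)
  finally show ?thesis .
qed

lemma phi_add: "phi c (t + s) = phi c t * phi c s"
proof -
  have "(\<Sum>i\<in>UNIV. real_of_int (c $ i) * (t + s) $ i) =
        (\<Sum>i\<in>UNIV. real_of_int (c $ i) * t $ i) + (\<Sum>i\<in>UNIV. real_of_int (c $ i) * s $ i)"
    by (simp add: distrib_left sum.distrib)
  then show ?thesis by (simp add: phi_def distrib_left exp_add[symmetric])
qed

lemma HH_dvd: assumes "c \<in> HH" shows "\<exists>n. c $ m = c $ 4 + 4 * n"
proof -
  have "c $ m mod 4 = c $ 4 mod 4" using assms by (auto simp: HH_def)
  then have "4 dvd (c $ m - c $ 4)" by (simp add: mod_eq_dvd_iff)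
  then obtain n where "c $ m - c $ 4 = 4 * n" by (auto elim: dvdE)
  then show ?thesis by (intro exI[of _ n]) simp
qed

lemma exp_int_mult: "N \<in> \<int> \<Longrightarrow> exp (complex_of_real (pi / 2) * \<i> * complex_of_real (4 * N)) = 1"
proof -
  assume "N \<in> \<int>"
  then obtain M where M: "N = of_int M" using Ints_cases by blast
  have "complex_of_real (pi / 2) * \<i> * complex_of_real (4 * N) = (2 * of_int M * pi) * \<i>"
    by (simp add: M field_simps)
  moreover have "exp ((2 * of_int M * pi) * \<i>) = 1" by (rule exp_integer_2pi) simp
  ultimately show ?thesis by metis
qed

lemma phi_one:
  assumes c: "c \<in> HH" and l: "\<And>m. l $ m \<in> \<int>" and ls: "(\<Sum>m\<in>UNIV. l $ m) = 0"
  shows "phi c l = 1"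
proof -
  obtain n where n: "\<And>m. c $ m = c $ 4 + 4 * n m" using HH_dvd[OF c] by metis
  have "(\<Sum>m\<in>UNIV. real_of_int (c $ m) * l $ m) =
        (\<Sum>m\<in>UNIV. real_of_int (c $ 4) * l $ m + 4 * (real_of_int (n m) * l $ m))"
    by (rule sum.cong[OF refl]) (subst n, simp add: algebra_simps)
  also have "\<dots> = real_of_int (c $ 4) * (\<Sum>m\<in>UNIV. l $ m) + 4 * (\<Sum>m\<in>UNIV. real_of_int (n m) * l $ m)"
    by (simp add: sum.distrib sum_distrib_left)
  also have "\<dots> = 4 * (\<Sum>m\<in>UNIV. real_of_int (n m) * l $ m)" using ls by simp
  finally have e: "(\<Sum>m\<in>UNIV. real_of_int (c $ m) * l $ m) = 4 * (\<Sum>m\<in>UNIV. real_of_int (n m) * l $ m)" .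
  have "(\<Sum>m\<in>UNIV. real_of_int (n m) * l $ m) \<in> \<int>"
    by (intro Ints_sum Ints_mult) (auto simp: l)
  then show ?thesis unfolding phi_def e by (rule exp_int_mult)
qed

lemma phi_embH_per: "c \<in> HH \<Longrightarrow> intv p \<Longrightarrow> phi c (embH (x + p)) = phi c (embH x)"
  by (simp add: embH_add phi_add phi_one embH_Ints sum_embH)

lemma linear_embH: "linear embH"
  by (rule linearI) (simp_all add: embH_add embH_scale)

lemma cont_embH_nth: "continuous_on UNIV (\<lambda>x. embH x $ m)"
  by (intro continuous_on_component linear_continuous_on) (simp add: linear_conv_bounded_linear[symmetric] linear_embH)

lemma cont_phi_embH: "continuous_on UNIV (\<lambda>x. phi c (embH x))"
  unfolding phi_def by (intro continuous_intros cont_embH_nth)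

lemma phi_zero: "phi 0 t = 1" by (simp add: phi_def)

lemma cube_zero:
  assumes c: "c \<in> HH" and w: "\<And>j. 0 \<le> w $ j \<and> w $ j \<le> 1" and pw: "phi c (embH w) = -1"
  shows "integral C (\<lambda>x. phi c (embH x)) = 0"
proof -
  have per: "periodic (\<lambda>x. phi c (embH x))" by (simp add: periodic_def phi_embH_per[OF c])
  have "integral C (\<lambda>x. phi c (embH (x + w))) = integral C (\<lambda>x. phi c (embH x))"
    by (rule transl_C[OF cont_phi_embH per w])
  moreover have "(\<lambda>x. phi c (embH (x + w))) = (\<lambda>x. - phi c (embH x))"
    by (simp add: embH_add phi_add pw)
  ultimately have "- integral C (\<lambda>x. phi c (embH x)) = integral C (\<lambda>x. phi c (embH x))"
    by (simp add: integral_neg)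
  then show ?thesis by simp
qed

lemma exp_pm2: "x = 2 \<or> x = -2 \<Longrightarrow> exp (complex_of_real (pi / 2) * \<i> * complex_of_real x) = -1"
proof -
  assume "x = 2 \<or> x = -2"
  then show ?thesis
  proof
    assume "x = 2"
    then have "complex_of_real (pi / 2) * \<i> * complex_of_real x = of_real pi * \<i>" by simp
    then show ?thesis by simp
  next
    assume "x = -2"
    then have "complex_of_real (pi / 2) * \<i> * complex_of_real x = - (of_real pi * \<i>)" by simp
    then show ?thesis by (simp add: exp_minus)
  qed
qed




lemma HH_sum: "c \<in> HH \<Longrightarrow> (\<Sum>i\<in>UNIV. c $ i) = 0"
  by (simp add: HH_def Z4H_def)

lemma cube_case:
  assumes c: "c \<in> HH" and ne: "c $ m \<noteq> c $ 4"
    and sm: "\<And>y. (\<Sum>k\<in>UNIV. real_of_int (c $ k) * embH (axis i y) $ k) = real_of_int (c $ m - c $ 4) * y"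
  shows "integral C (\<lambda>x. phi c (embH x)) = 0"
proof -
  define d where "d = c $ m - c $ 4"
  obtain n where n: "c $ m = c $ 4 + 4 * n" using HH_dvd[OF c] by blast
  have dn: "d = 4 * n" by (simp add: d_def n)
  have "n \<noteq> 0" using ne n by auto
  then have dge: "4 \<le> \<bar>d\<bar>" unfolding dn by (simp add: abs_mult)
  define s where "s = 2 / \<bar>real_of_int d\<bar>"
  have dge': "4 \<le> \<bar>real_of_int d\<bar>" using dge by linarith
  have s: "0 \<le> s \<and> s \<le> 1" using dge' by (simp add: s_def field_simps)
  define w where "w = axis i s"
  have w: "0 \<le> w $ j \<and> w $ j \<le> 1" for j using s by (simp add: w_def axis_def)
  have ds: "real_of_int d * s = 2 \<or> real_of_int d * s = -2"
  proof (cases "d > 0")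
    case True then show ?thesis using dge' by (simp add: s_def)
  next
    case False then have "d < 0" using dge by auto
    then show ?thesis using dge' by (simp add: s_def)
  qed
  have "phi c (embH w) = -1"
    unfolding phi_def w_def sm d_def[symmetric] by (rule exp_pm2[OF ds])
  then show ?thesis using cube_zero[OF c w] by blast
qed

lemma cube_exp:
  assumes c: "c \<in> HH"
  shows "integral C (\<lambda>x. phi c (embH x)) = (if c = 0 then 1 else 0)"
proof (cases "c = 0")
  case True then show ?thesis by (simp add: phi_zero int_C_one)
next
  case False
  have "c $ 1 \<noteq> c $ 4 \<or> c $ 2 \<noteq> c $ 4 \<or> c $ 3 \<noteq> c $ 4"
  proof (rule ccontr)
    assume "\<not> ?thesis"
    then have e: "c $ 1 = c $ 4" "c $ 2 = c $ 4" "c $ 3 = c $ 4" by auto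
    have "c $ 1 + c $ 2 + c $ 3 + c $ 4 = 0" using HH_sum[OF c] by (simp add: sum_4)
    then have "c $ 4 = 0" using e by simp
    then have "c = 0" using e by (simp add: vec_eq_iff forall_4)
    then show False using False by simp
  qed
  then have "integral C (\<lambda>x. phi c (embH x)) = 0"
  proof (elim disjE)
    assume "c $ 1 \<noteq> c $ 4"
    then show ?thesis by (rule cube_case[OF c _, where i=1]) (simp add: sum_4 axis_def algebra_simps)
  next
    assume "c $ 2 \<noteq> c $ 4"
    then show ?thesis by (rule cube_case[OF c _, where i=2]) (simp add: sum_4 axis_def algebra_simps)
  next
    assume "c $ 3 \<noteq> c $ 4"
    then show ?thesis by (rule cube_case[OF c _, where i=3]) (simp add: sum_4 axis_def algebra_simps)
  qed
  then show ?thesis using False by simp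
qed


lemma phi_pvec:
  assumes "\<sigma> permutes UNIV"
  shows "phi k (pvec t \<sigma>) = phi (pvec k (inv \<sigma>)) t"
proof -
  have "(\<Sum>i\<in>UNIV. real_of_int (k $ inv \<sigma> i) * t $ i) = (\<Sum>i\<in>UNIV. real_of_int (k $ i) * t $ \<sigma> i)"
    using sum.permute[OF assms, of "\<lambda>i. real_of_int (k $ inv \<sigma> i) * t $ i"]
    by (simp add: o_def permutes_inverses(2)[OF assms])
  then show ?thesis by (simp add: phi_def)
qed

lemma phi_cnj: "phi a t * cnj (phi b t) = phi (a - b) t"
proof -
  define X where "X = complex_of_real (pi / 2) * \<i>"
  define A where "A = (\<Sum>i\<in>UNIV. real_of_int (a $ i) * t $ i)"
  define B where "B = (\<Sum>i\<in>UNIV. real_of_int (b $ i) * t $ i)"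
  have AB: "(\<Sum>i\<in>UNIV. real_of_int ((a - b) $ i) * t $ i) = A - B"
    by (simp add: A_def B_def sum_subtractf[symmetric] algebra_simps)
  have cX: "cnj X = - X" by (simp add: X_def)
  have "phi a t * cnj (phi b t) = exp (X * of_real A) * exp (cnj (X * of_real B))"
    by (simp add: phi_def X_def A_def B_def exp_cnj)
  also have "\<dots> = exp (X * of_real A) * exp (- (X * of_real B))" by (simp add: cX)
  also have "\<dots> = exp (X * of_real A + - (X * of_real B))" by (rule mult_exp_exp)
  also have "X * of_real A + - (X * of_real B) = X * of_real (A - B)" by (simp add: algebra_simps)
  finally have eq: "phi a t * cnj (phi b t) = exp (X * of_real (A - B))" .
  have "phi (a - b) t = exp (X * of_real (A - B))" unfolding phi_def X_def AB by (rule refl)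
  then show ?thesis using eq by simp
qed

lemma HH_diff:
  assumes k: "k \<in> HH" and j: "j \<in> HH" and s: "\<sigma> permutes UNIV" and t: "\<tau> permutes UNIV"
  shows "pvec k \<sigma> - pvec j \<tau> \<in> HH"
proof -
  have "(\<Sum>i\<in>UNIV. (pvec k \<sigma> - pvec j \<tau>) $ i) = 0"
    using sum_pvec[OF s, of k] sum_pvec[OF t, of j] HH_sum[OF k] HH_sum[OF j]
    by (simp add: sum_subtractf)
  moreover have "(pvec k \<sigma> - pvec j \<tau>) $ a mod 4 = (pvec k \<sigma> - pvec j \<tau>) $ b mod 4" for a b
  proof -
    have "k $ \<sigma> a mod 4 = k $ \<sigma> b mod 4" "j $ \<tau> a mod 4 = j $ \<tau> b mod 4"
      using k j by (auto simp: HH_def)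
    then have "(k $ \<sigma> a - j $ \<tau> a) mod 4 = (k $ \<sigma> b - j $ \<tau> b) mod 4" by (rule mod_diff_cong)
    then show ?thesis by simp
  qed
  ultimately show ?thesis by (simp add: HH_def Z4H_def)
qed

lemma sum_G4_left:
  assumes s: "\<sigma> \<in> G4"
  shows "(\<Sum>\<tau>\<in>G4. h (\<sigma> \<circ> \<tau>)) = (\<Sum>\<tau>\<in>G4. h \<tau>)"
proof (rule sum.reindex_bij_witness[where i="\<lambda>\<tau>. inv \<sigma> \<circ> \<tau>" and j="\<lambda>\<tau>. \<sigma> \<circ> \<tau>"])
  have p: "\<sigma> permutes UNIV" using G4_perm[OF s] .
  show "inv \<sigma> \<circ> (\<sigma> \<circ> a) = a" for a by (simp add: o_assoc permutes_inv_o(2)[OF p])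
  show "\<sigma> \<circ> (inv \<sigma> \<circ> a) = a" for a by (simp add: o_assoc permutes_inv_o(1)[OF p])
  show "\<sigma> \<circ> a \<in> G4" if "a \<in> G4" for a using G4_comp[OF s that] .
  show "inv \<sigma> \<circ> a \<in> G4" if "a \<in> G4" for a using G4_comp[OF G4_inv[OF s] that] .
qed simp

lemma sum_G4_inv: "(\<Sum>\<tau>\<in>G4. h (inv \<tau>)) = (\<Sum>\<tau>\<in>G4. h \<tau>)"
  by (rule sum.reindex_bij_witness[where i="inv" and j="inv"]) (metis G4_inv G4_perm permutes_inv_inv)+

lemma TC_pvec: "\<sigma> \<in> G4 \<Longrightarrow> TC k (pvec t \<sigma>) = TC k t"
  unfolding TC_def pvec_pvec by (simp add: sum_G4_left[where h="\<lambda>\<tau>. phi k (pvec t \<tau>)"])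

lemma perm_G4: "\<sigma> \<in> G4 \<Longrightarrow> permutation \<sigma>"
  by (rule permutes_imp_permutation[OF finite_class.finite_UNIV G4_perm])

lemma TS_pvec: assumes s: "\<sigma> \<in> G4" shows "TS k (pvec t \<sigma>) = of_int (sign \<sigma>) * TS k t"
proof -
  have "(\<Sum>\<tau>\<in>G4. of_int (sign \<tau>) * phi k (pvec t (\<sigma> \<circ> \<tau>)))
      = (\<Sum>\<tau>\<in>G4. of_int (sign \<sigma>) * (of_int (sign (\<sigma> \<circ> \<tau>)) * phi k (pvec t (\<sigma> \<circ> \<tau>))) :: complex)"
  proof (rule sum.cong[OF refl])
    fix \<tau> assume t: "\<tau> \<in> G4"
    have "sign (\<sigma> \<circ> \<tau>) = sign \<sigma> * sign \<tau>" using sign_compose[OF perm_G4[OF s] perm_G4[OF t]] .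
    then have "sign \<sigma> * sign (\<sigma> \<circ> \<tau>) = sign \<tau>" by (simp add: mult.assoc[symmetric])
    then have "of_int (sign \<sigma>) * of_int (sign (\<sigma> \<circ> \<tau>)) = (of_int (sign \<tau>) :: complex)"
      by (metis of_int_mult)
    then show "of_int (sign \<tau>) * phi k (pvec t (\<sigma> \<circ> \<tau>))
      = of_int (sign \<sigma>) * (of_int (sign (\<sigma> \<circ> \<tau>)) * phi k (pvec t (\<sigma> \<circ> \<tau>)))"
      by (simp add: mult.assoc[symmetric])
  qed
  also have "\<dots> = of_int (sign \<sigma>) * (\<Sum>\<tau>\<in>G4. of_int (sign \<tau>) * phi k (pvec t \<tau>))"
    by (simp add: sum_distrib_left[symmetric] sum_G4_left[OF s, where h="\<lambda>\<tau>. of_int (sign \<tau>) * phi k (pvec t \<tau>)"])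
  finally show ?thesis unfolding TS_def pvec_pvec by simp
qed

lemma pvec_add: "pvec (t + s) \<sigma> = pvec t \<sigma> + pvec s \<sigma>"
  by (simp add: vec_eq_iff)

lemma phi_pvec_per:
  assumes k: "k \<in> HH" and s: "\<sigma> \<in> G4" and p: "intv p"
  shows "phi k (pvec (embH (x + p)) \<sigma>) = phi k (pvec (embH x) \<sigma>)"
proof -
  have "phi k (pvec (embH p) \<sigma>) = 1"
    by (rule phi_one[OF k]) (simp_all add: embH_Ints[OF p] sum_pvec[OF G4_perm[OF s]] sum_embH)
  then show ?thesis by (simp add: embH_add pvec_add phi_add)
qed

lemma TC_per: "k \<in> HH \<Longrightarrow> intv p \<Longrightarrow> TC k (embH (x + p)) = TC k (embH x)"
  unfolding TC_def by (simp add: phi_pvec_per)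

lemma TS_per: "k \<in> HH \<Longrightarrow> intv p \<Longrightarrow> TS k (embH (x + p)) = TS k (embH x)"
  unfolding TS_def by (simp add: phi_pvec_per)

lemma TC_exp: "TC k t = (1/24) * (\<Sum>\<sigma>\<in>G4. phi (pvec k \<sigma>) t)"
proof -
  have "(\<Sum>\<sigma>\<in>G4. phi k (pvec t \<sigma>)) = (\<Sum>\<sigma>\<in>G4. phi (pvec k (inv \<sigma>)) t)"
    by (rule sum.cong[OF refl]) (simp add: phi_pvec G4_perm)
  also have "\<dots> = (\<Sum>\<sigma>\<in>G4. phi (pvec k \<sigma>) t)" by (rule sum_G4_inv)
  finally show ?thesis by (simp add: TC_def)
qed

lemma TS_exp: "TS k t = - (1/24) * (\<Sum>\<sigma>\<in>G4. of_int (sign \<sigma>) * phi (pvec k \<sigma>) t)"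
proof -
  have "(\<Sum>\<sigma>\<in>G4. of_int (sign \<sigma>) * phi k (pvec t \<sigma>)) = (\<Sum>\<sigma>\<in>G4. of_int (sign (inv \<sigma>)) * phi (pvec k (inv \<sigma>)) t)"
    by (rule sum.cong[OF refl]) (simp add: phi_pvec G4_perm sign_inverse perm_G4)
  also have "\<dots> = (\<Sum>\<sigma>\<in>G4. of_int (sign \<sigma>) * phi (pvec k \<sigma>) t)"
    by (rule sum_G4_inv[where h="\<lambda>\<sigma>. of_int (sign \<sigma>) * phi (pvec k \<sigma>) t"])
  finally show ?thesis by (simp add: TS_def)
qed

lemma TC_prod: "TC k t * cnj (TC j t) = (1/576) * (\<Sum>\<sigma>\<in>G4. \<Sum>\<tau>\<in>G4. phi (pvec k \<sigma> - pvec j \<tau>) t)"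
proof -
  have "cnj (TC j t) = 1/24 * (\<Sum>\<tau>\<in>G4. cnj (phi (pvec j \<tau>) t))" by (simp add: TC_exp cnj_sum)
  then have "TC k t * cnj (TC j t) = (1/24 * (\<Sum>\<sigma>\<in>G4. phi (pvec k \<sigma>) t)) * (1/24 * (\<Sum>\<tau>\<in>G4. cnj (phi (pvec j \<tau>) t)))"
    by (simp add: TC_exp)
  also have "\<dots> = 1/576 * ((\<Sum>\<sigma>\<in>G4. phi (pvec k \<sigma>) t) * (\<Sum>\<tau>\<in>G4. cnj (phi (pvec j \<tau>) t)))" by simp
  also have "(\<Sum>\<sigma>\<in>G4. phi (pvec k \<sigma>) t) * (\<Sum>\<tau>\<in>G4. cnj (phi (pvec j \<tau>) t))
      = (\<Sum>\<sigma>\<in>G4. \<Sum>\<tau>\<in>G4. phi (pvec k \<sigma>) t * cnj (phi (pvec j \<tau>) t))" by (rule sum_product)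
  finally show ?thesis by (simp add: phi_cnj)
qed

lemma TS_prod: "TS k t * cnj (TS j t) = (1/576) * (\<Sum>\<sigma>\<in>G4. \<Sum>\<tau>\<in>G4. of_int (sign \<sigma> * sign \<tau>) * phi (pvec k \<sigma> - pvec j \<tau>) t)"
proof -
  have "cnj (TS j t) = - (1/24) * (\<Sum>\<tau>\<in>G4. of_int (sign \<tau>) * cnj (phi (pvec j \<tau>) t))" by (simp add: TS_exp cnj_sum)
  then have "TS k t * cnj (TS j t) = (- (1/24) * (\<Sum>\<sigma>\<in>G4. of_int (sign \<sigma>) * phi (pvec k \<sigma>) t)) * (- (1/24) * (\<Sum>\<tau>\<in>G4. of_int (sign \<tau>) * cnj (phi (pvec j \<tau>) t)))"
    by (simp add: TS_exp)
  also have "\<dots> = 1/576 * ((\<Sum>\<sigma>\<in>G4. of_int (sign \<sigma>) * phi (pvec k \<sigma>) t) * (\<Sum>\<tau>\<in>G4. of_int (sign \<tau>) * cnj (phi (pvec j \<tau>) t)))" by simp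
  also have "(\<Sum>\<sigma>\<in>G4. of_int (sign \<sigma>) * phi (pvec k \<sigma>) t) * (\<Sum>\<tau>\<in>G4. of_int (sign \<tau>) * cnj (phi (pvec j \<tau>) t))
      = (\<Sum>\<sigma>\<in>G4. \<Sum>\<tau>\<in>G4. (of_int (sign \<sigma>) * phi (pvec k \<sigma>) t) * (of_int (sign \<tau>) * cnj (phi (pvec j \<tau>) t)))"
    by (rule sum_product)
  also have "\<dots> = (\<Sum>\<sigma>\<in>G4. \<Sum>\<tau>\<in>G4. of_int (sign \<sigma> * sign \<tau>) * phi (pvec k \<sigma> - pvec j \<tau>) t)"
    by (intro sum.cong refl) (simp add: phi_cnj[symmetric])
  finally show ?thesis .
qed




lemma int_phi_C: "c \<in> HH \<Longrightarrow> (\<lambda>x. phi c (embH x)) integrable_on C"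
  unfolding C_def by (rule integrable_continuous[OF continuous_on_subset[OF cont_phi_embH]]) simp

lemma int_TC:
  assumes k: "k \<in> HH" and j: "j \<in> HH"
  shows "integral C (\<lambda>x. TC k (embH x) * cnj (TC j (embH x)))
       = (1/576) * (\<Sum>\<sigma>\<in>G4. \<Sum>\<tau>\<in>G4. if pvec k \<sigma> = pvec j \<tau> then 1 else 0)"
proof -
  have hh: "\<sigma> \<in> G4 \<Longrightarrow> \<tau> \<in> G4 \<Longrightarrow> pvec k \<sigma> - pvec j \<tau> \<in> HH" for \<sigma> \<tau>
    by (rule HH_diff[OF k j G4_perm G4_perm])
  have "integral C (\<lambda>x. TC k (embH x) * cnj (TC j (embH x)))
      = integral C (\<lambda>x. (1/576) * (\<Sum>\<sigma>\<in>G4. \<Sum>\<tau>\<in>G4. phi (pvec k \<sigma> - pvec j \<tau>) (embH x)))"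
    by (simp only: TC_prod)
  also have "\<dots> = (1/576) * integral C (\<lambda>x. \<Sum>\<sigma>\<in>G4. \<Sum>\<tau>\<in>G4. phi (pvec k \<sigma> - pvec j \<tau>) (embH x))"
    by (rule integral_mult_right)
  also have "integral C (\<lambda>x. \<Sum>\<sigma>\<in>G4. \<Sum>\<tau>\<in>G4. phi (pvec k \<sigma> - pvec j \<tau>) (embH x))
      = (\<Sum>\<sigma>\<in>G4. integral C (\<lambda>x. \<Sum>\<tau>\<in>G4. phi (pvec k \<sigma> - pvec j \<tau>) (embH x)))"
    by (rule integral_sum[OF finite_G4]) (intro Henstock_Kurzweil_Integration.integrable_sum finite_G4 int_phi_C hh)
  also have "\<dots> = (\<Sum>\<sigma>\<in>G4. \<Sum>\<tau>\<in>G4. integral C (\<lambda>x. phi (pvec k \<sigma> - pvec j \<tau>) (embH x)))"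
    by (intro sum.cong refl integral_sum finite_G4 int_phi_C hh)
  also have "\<dots> = (\<Sum>\<sigma>\<in>G4. \<Sum>\<tau>\<in>G4. if pvec k \<sigma> = pvec j \<tau> then 1 else 0)"
    by (intro sum.cong refl) (simp add: cube_exp hh)
  finally show ?thesis .
qed

lemma int_TS:
  assumes k: "k \<in> HH" and j: "j \<in> HH"
  shows "integral C (\<lambda>x. TS k (embH x) * cnj (TS j (embH x)))
       = (1/576) * (\<Sum>\<sigma>\<in>G4. \<Sum>\<tau>\<in>G4. if pvec k \<sigma> = pvec j \<tau> then of_int (sign \<sigma> * sign \<tau>) else 0)"
proof -
  have hh: "\<sigma> \<in> G4 \<Longrightarrow> \<tau> \<in> G4 \<Longrightarrow> pvec k \<sigma> - pvec j \<tau> \<in> HH" for \<sigma> \<tau>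
    by (rule HH_diff[OF k j G4_perm G4_perm])
  have ii: "\<sigma> \<in> G4 \<Longrightarrow> \<tau> \<in> G4 \<Longrightarrow> (\<lambda>x. of_int (sign \<sigma> * sign \<tau>) * phi (pvec k \<sigma> - pvec j \<tau>) (embH x)) integrable_on C" for \<sigma> \<tau>
    by (intro integrable_on_mult_right int_phi_C hh)
  have "integral C (\<lambda>x. TS k (embH x) * cnj (TS j (embH x)))
      = integral C (\<lambda>x. (1/576) * (\<Sum>\<sigma>\<in>G4. \<Sum>\<tau>\<in>G4. of_int (sign \<sigma> * sign \<tau>) * phi (pvec k \<sigma> - pvec j \<tau>) (embH x)))"
    by (simp only: TS_prod)
  also have "\<dots> = (1/576) * integral C (\<lambda>x. \<Sum>\<sigma>\<in>G4. \<Sum>\<tau>\<in>G4. of_int (sign \<sigma> * sign \<tau>) * phi (pvec k \<sigma> - pvec j \<tau>) (embH x))"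
    by (rule integral_mult_right)
  also have "integral C (\<lambda>x. \<Sum>\<sigma>\<in>G4. \<Sum>\<tau>\<in>G4. of_int (sign \<sigma> * sign \<tau>) * phi (pvec k \<sigma> - pvec j \<tau>) (embH x))
      = (\<Sum>\<sigma>\<in>G4. integral C (\<lambda>x. \<Sum>\<tau>\<in>G4. of_int (sign \<sigma> * sign \<tau>) * phi (pvec k \<sigma> - pvec j \<tau>) (embH x)))"
    by (rule integral_sum[OF finite_G4]) (intro Henstock_Kurzweil_Integration.integrable_sum finite_G4 ii)
  also have "\<dots> = (\<Sum>\<sigma>\<in>G4. \<Sum>\<tau>\<in>G4. integral C (\<lambda>x. of_int (sign \<sigma> * sign \<tau>) * phi (pvec k \<sigma> - pvec j \<tau>) (embH x)))"
    by (intro sum.cong refl integral_sum finite_G4 ii)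
  also have "\<dots> = (\<Sum>\<sigma>\<in>G4. \<Sum>\<tau>\<in>G4. if pvec k \<sigma> = pvec j \<tau> then of_int (sign \<sigma> * sign \<tau>) else 0)"
    by (intro sum.cong refl) (simp add: cube_exp hh)
  finally show ?thesis .
qed

lemma cont_TC: "continuous_on UNIV (\<lambda>x. TC k (embH x) * cnj (TC j (embH x)))"
  unfolding TC_prod by (intro continuous_intros cont_phi_embH)

lemma cont_TS: "continuous_on UNIV (\<lambda>x. TS k (embH x) * cnj (TS j (embH x)))"
  unfolding TS_prod by (intro continuous_intros cont_phi_embH)

lemma ip_TC: "k \<in> HH \<Longrightarrow> j \<in> HH \<Longrightarrow> ipH (TC k) (TC j) = integral C (\<lambda>x. TC k (embH x) * cnj (TC j (embH x)))"
  by (rule ipH_eq[OF cont_TC]) (simp_all add: periodic_def TC_per embH_Pm TC_pvec)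

lemma ip_TS: "k \<in> HH \<Longrightarrow> j \<in> HH \<Longrightarrow> ipH (TS k) (TS j) = integral C (\<lambda>x. TS k (embH x) * cnj (TS j (embH x)))"
proof (rule ipH_eq[OF cont_TS])
  assume "k \<in> HH" "j \<in> HH"
  then show "periodic (\<lambda>x. TS k (embH x) * cnj (TS j (embH x)))" by (simp add: periodic_def TS_per)
  fix \<sigma> x assume s: "\<sigma> \<in> G4"
  have "of_int (sign \<sigma>) * of_int (sign \<sigma>) = (1::complex)" by (metis of_int_mult sign_idempotent of_int_1)
  then show "TS k (embH (Pm \<sigma> x)) * cnj (TS j (embH (Pm \<sigma> x))) = TS k (embH x) * cnj (TS j (embH x))"
    by (simp add: embH_Pm[OF s] TS_pvec[OF s] mult_ac)
qed




lemma Lam_HH: "k \<in> Lam \<Longrightarrow> k \<in> HH" by (simp add: Lam_def)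
lemma Lam_int_Lam: "k \<in> Lam_int \<Longrightarrow> k \<in> Lam" by (auto simp: Lam_int_def Lam_def)

lemma pvec_id: "pvec k id = k" by (simp add: vec_eq_iff)

lemma pvec_inv: "\<sigma> \<in> G4 \<Longrightarrow> pvec (pvec k \<sigma>) (inv \<sigma>) = k"
  by (simp add: pvec_pvec permutes_inv_o(1)[OF G4_perm] pvec_id)

lemma sorted_eq:
  assumes k: "k \<in> Lam" and j: "j \<in> Lam" and r: "\<rho> \<in> G4" and kj: "k = pvec j \<rho>"
  shows "k = j"
proof -
  have kd: "k$2 \<le> k$1" "k$3 \<le> k$2" "k$4 \<le> k$3" using k by (auto simp: Lam_def)
  have jd: "j$2 \<le> j$1" "j$3 \<le> j$2" "j$4 \<le> j$3" using j by (auto simp: Lam_def)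
  have kmax: "k$m \<le> k$1" "k$4 \<le> k$m" for m using kd exhaust_4[of m] by auto
  have jmax: "j$m \<le> j$1" "j$4 \<le> j$m" for m using jd exhaust_4[of m] by auto
  have jk: "j = pvec k (inv \<rho>)" using pvec_inv[OF r, of j] kj by simp
  have km: "k$m = j$(\<rho> m)" for m using kj by simp
  have jm: "j$m = k$(inv \<rho> m)" for m using jk by (metis pvec_nth)
  have e1: "k$1 = j$1" using km[of 1] jm[of 1] kmax(1)[of "inv \<rho> 1"] jmax(1)[of "\<rho> 1"] by linarith
  have e4: "k$4 = j$4" using km[of 4] jm[of 4] kmax(2)[of "inv \<rho> 4"] jmax(2)[of "\<rho> 4"] by linarith
  have sk: "k$1 + k$2 + k$3 + k$4 = 0" using Lam_HH[OF k] HH_sum by (simp add: sum_4)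
  have sj: "j$1 + j$2 + j$3 + j$4 = 0" using Lam_HH[OF j] HH_sum by (simp add: sum_4)
  have "(\<Sum>m\<in>UNIV. (k$m)^2) = (\<Sum>m\<in>UNIV. (j$(\<rho> m))^2)" by (simp add: km)
  also have "\<dots> = (\<Sum>m\<in>UNIV. (j$m)^2)"
    using sum.permute[OF G4_perm[OF r], of "\<lambda>m. (j$m)^2"] by (simp add: o_def)
  finally have sq: "(k$1)^2 + (k$2)^2 + (k$3)^2 + (k$4)^2 = (j$1)^2 + (j$2)^2 + (j$3)^2 + (j$4)^2"
    by (simp add: sum_4)
  have s23: "k$2 + k$3 = j$2 + j$3" using sk sj e1 e4 by linarith
  have q23: "(k$2)^2 + (k$3)^2 = (j$2)^2 + (j$3)^2" using sq e1 e4 by simp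
  have "(k$2 - k$3)^2 = 2 * ((k$2)^2 + (k$3)^2) - (k$2 + k$3)^2" by (simp add: power2_eq_square algebra_simps)
  also have "\<dots> = 2 * ((j$2)^2 + (j$3)^2) - (j$2 + j$3)^2" using s23 q23 by simp
  also have "\<dots> = (j$2 - j$3)^2" by (simp add: power2_eq_square algebra_simps)
  finally have "k$2 - k$3 = j$2 - j$3"
    by (rule power2_eq_imp_eq) (use kd jd in auto)
  then have e2: "k$2 = j$2" "k$3 = j$3" using s23 by linarith+
  show ?thesis using e1 e2 e4 by (simp add: vec_eq_iff forall_4)
qed

lemma perm_eq_imp:
  assumes k: "k \<in> Lam" and j: "j \<in> Lam" and s: "\<sigma> \<in> G4" and t: "\<tau> \<in> G4" and e: "pvec k \<sigma> = pvec j \<tau>"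
  shows "k = j"
proof -
  have "k = pvec (pvec j \<tau>) (inv \<sigma>)" using pvec_inv[OF s, of k] e by simp
  also have "\<dots> = pvec j (\<tau> \<circ> inv \<sigma>)" by (simp add: pvec_pvec)
  finally show ?thesis by (rule sorted_eq[OF k j G4_comp[OF t G4_inv[OF s]]])
qed

definition stab :: "int^4 \<Rightarrow> (4 \<Rightarrow> 4) set" where "stab k = {\<rho>\<in>G4. pvec k \<rho> = k}"

lemma fiber_card:
  assumes s: "\<sigma> \<in> G4"
  shows "card {\<tau>\<in>G4. pvec k \<tau> = pvec k \<sigma>} = card (stab k)"
proof (rule bij_betw_same_card[of "\<lambda>\<tau>. \<tau> \<circ> inv \<sigma>"], rule bij_betw_byWitness[where f'="\<lambda>\<rho>. \<rho> \<circ> \<sigma>"])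
  have p: "\<sigma> permutes UNIV" using G4_perm[OF s] .
  show "\<forall>a\<in>{\<tau> \<in> G4. pvec k \<tau> = pvec k \<sigma>}. a \<circ> inv \<sigma> \<circ> \<sigma> = a"
    by (simp add: o_assoc[symmetric] permutes_inv_o(2)[OF p])
  show "\<forall>a'\<in>stab k. a' \<circ> \<sigma> \<circ> inv \<sigma> = a'"
    by (simp add: o_assoc[symmetric] permutes_inv_o(1)[OF p])
  show "(\<lambda>\<tau>. \<tau> \<circ> inv \<sigma>) ` {\<tau> \<in> G4. pvec k \<tau> = pvec k \<sigma>} \<subseteq> stab k"
  proof safe
    fix \<tau> assume t: "\<tau> \<in> G4" "pvec k \<tau> = pvec k \<sigma>"
    have "pvec k (\<tau> \<circ> inv \<sigma>) = pvec (pvec k \<tau>) (inv \<sigma>)" by (simp add: pvec_pvec)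
    also have "\<dots> = k" using t(2) pvec_inv[OF s] by simp
    finally show "\<tau> \<circ> inv \<sigma> \<in> stab k" using G4_comp[OF t(1) G4_inv[OF s]] by (simp add: stab_def)
  qed
  show "(\<lambda>\<rho>. \<rho> \<circ> \<sigma>) ` stab k \<subseteq> {\<tau> \<in> G4. pvec k \<tau> = pvec k \<sigma>}"
  proof safe
    fix \<rho> assume "\<rho> \<in> stab k"
    then have r: "\<rho> \<in> G4" "pvec k \<rho> = k" by (auto simp: stab_def)
    show "\<rho> \<circ> \<sigma> \<in> G4" using G4_comp[OF r(1) s] .
    show "pvec k (\<rho> \<circ> \<sigma>) = pvec k \<sigma>" using r(2) by (simp add: pvec_pvec[symmetric])
  qed
qed

lemma orbit_stab: "orbit_card k * card (stab k) = 24"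
proof -
  have "card G4 = (\<Sum>\<tau>\<in>G4. 1::nat)" by simp
  also have "\<dots> = (\<Sum>y\<in>pvec k ` G4. \<Sum>\<tau>\<in>{\<tau>. \<tau> \<in> G4 \<and> pvec k \<tau> = y}. 1)"
    by (rule sum.image_gen[OF finite_G4])
  also have "\<dots> = (\<Sum>y\<in>pvec k ` G4. card (stab k))"
  proof (rule sum.cong[OF refl])
    fix y assume "y \<in> pvec k ` G4"
    then obtain \<sigma> where s: "\<sigma> \<in> G4" "y = pvec k \<sigma>" by blast
    show "(\<Sum>\<tau>\<in>{\<tau>. \<tau> \<in> G4 \<and> pvec k \<tau> = y}. 1) = card (stab k)"
      using fiber_card[OF s(1), of k] s(2) by simp
  qed
  also have "\<dots> = orbit_card k * card (stab k)" by (simp add: orbit_card_def)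
  finally show ?thesis using card_G4 by simp
qed

lemma count_TC:
  assumes k: "k \<in> Lam" and j: "j \<in> Lam"
  shows "(\<Sum>\<sigma>\<in>G4. \<Sum>\<tau>\<in>G4. if pvec k \<sigma> = pvec j \<tau> then (1::complex) else 0)
       = (if k = j then 24 * of_nat (card (stab k)) else 0)"
proof (cases "k = j")
  case False
  have "(\<Sum>\<sigma>\<in>G4. \<Sum>\<tau>\<in>G4. if pvec k \<sigma> = pvec j \<tau> then (1::complex) else 0) = (\<Sum>\<sigma>\<in>G4. \<Sum>\<tau>\<in>G4. 0)"
    by (intro sum.cong refl) (use perm_eq_imp[OF k j] False in auto)
  then show ?thesis using False by simp
next
  case True
  have "(\<Sum>\<sigma>\<in>G4. \<Sum>\<tau>\<in>G4. if pvec k \<sigma> = pvec k \<tau> then (1::complex) else 0)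
      = (\<Sum>\<sigma>\<in>G4. of_nat (card (stab k)))"
  proof (rule sum.cong[OF refl])
    fix \<sigma> assume s: "\<sigma> \<in> G4"
    have "(\<Sum>\<tau>\<in>G4. if pvec k \<sigma> = pvec k \<tau> then (1::complex) else 0)
        = (\<Sum>\<tau>\<in>{\<tau>\<in>G4. pvec k \<tau> = pvec k \<sigma>}. 1)"
      by (subst sum.inter_filter[OF finite_G4]) (auto intro: sum.cong)
    also have "\<dots> = of_nat (card {\<tau>\<in>G4. pvec k \<tau> = pvec k \<sigma>})" by simp
    finally show "(\<Sum>\<tau>\<in>G4. if pvec k \<sigma> = pvec k \<tau> then (1::complex) else 0) = of_nat (card (stab k))"
      using fiber_card[OF s, of k] by simp
  qed
  then show ?thesis using True card_G4 by simp
qed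

lemma count_TS:
  assumes k: "k \<in> Lam_int" and j: "j \<in> Lam_int"
  shows "(\<Sum>\<sigma>\<in>G4. \<Sum>\<tau>\<in>G4. if pvec k \<sigma> = pvec j \<tau> then of_int (sign \<sigma> * sign \<tau>) else (0::complex))
       = (if k = j then 24 else 0)"
proof (cases "k = j")
  case False
  have "(\<Sum>\<sigma>\<in>G4. \<Sum>\<tau>\<in>G4. if pvec k \<sigma> = pvec j \<tau> then of_int (sign \<sigma> * sign \<tau>) else (0::complex))
      = (\<Sum>\<sigma>\<in>G4. \<Sum>\<tau>\<in>G4. 0)"
    by (intro sum.cong refl) (use perm_eq_imp[OF Lam_int_Lam[OF k] Lam_int_Lam[OF j]] False in auto)
  then show ?thesis using False by simp
next
  case True
  have kd: "k$1 > k$2" "k$2 > k$3" "k$3 > k$4" using k by (auto simp: Lam_int_def)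
  have kinj: "k $ a = k $ b \<Longrightarrow> a = b" for a b
    using exhaust_4[of a] exhaust_4[of b] kd by auto
  have peq: "pvec k \<sigma> = pvec k \<tau> \<longleftrightarrow> \<sigma> = \<tau>" for \<sigma> \<tau>
    by (auto simp: vec_eq_iff fun_eq_iff kinj)
  have "(\<Sum>\<sigma>\<in>G4. \<Sum>\<tau>\<in>G4. if pvec k \<sigma> = pvec k \<tau> then of_int (sign \<sigma> * sign \<tau>) else (0::complex))
      = (\<Sum>\<sigma>\<in>G4. 1)"
  proof (rule sum.cong[OF refl])
    fix \<sigma> assume s: "\<sigma> \<in> G4"
    have "(\<Sum>\<tau>\<in>G4. if pvec k \<sigma> = pvec k \<tau> then of_int (sign \<sigma> * sign \<tau>) else (0::complex))
        = (\<Sum>\<tau>\<in>G4. if \<sigma> = \<tau> then of_int (sign \<sigma> * sign \<tau>) else 0)" by (simp add: peq)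
    also have "\<dots> = 1" using s finite_G4 by simp
    finally show "(\<Sum>\<tau>\<in>G4. if pvec k \<sigma> = pvec k \<tau> then of_int (sign \<sigma> * sign \<tau>) else (0::complex)) = 1" .
  qed
  then show ?thesis using True card_G4 by simp
qed

theorem proposition4p3:
  shows "(\<forall>k\<in>Lam. \<forall>j\<in>Lam.
            ipH (TC k) (TC j) = (if k = j then 1 / of_nat (orbit_card k) else 0))
       \<and> (\<forall>k\<in>Lam_int. \<forall>j\<in>Lam_int.
            ipH (TS k) (TS j) = (if k = j then 1 / 24 else 0))"
proof (intro conjI ballI)
  fix k j assume k: "k \<in> Lam" and j: "j \<in> Lam"
  have "ipH (TC k) (TC j) = (1/576) * (if k = j then 24 * of_nat (card (stab k)) else 0)"
    using ip_TC[OF Lam_HH[OF k] Lam_HH[OF j]] int_TC[OF Lam_HH[OF k] Lam_HH[OF j]] count_TC[OF k j] by simp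
  also have "\<dots> = (if k = j then 1 / of_nat (orbit_card k) else 0)"
  proof -
    have h: "of_nat (orbit_card k) * of_nat (card (stab k)) = (24::complex)"
      using orbit_stab[of k] by (metis of_nat_mult of_nat_numeral)
    have "orbit_card k \<noteq> 0" using orbit_stab[of k] by (metis mult_0 zero_neq_numeral)
    then have "of_nat (orbit_card k) \<noteq> (0::complex)" by simp
    then have "of_nat (card (stab k)) = 24 / (of_nat (orbit_card k) :: complex)"
      using h by (simp add: field_simps)
    then have e: "(1/576) * (24 * of_nat (card (stab k))) = 1 / (of_nat (orbit_card k) :: complex)"
      by simp
    show ?thesis
    proof (cases "k = j")
      case True then show ?thesis using e by simp
    qed simp
  qed
  finally show "ipH (TC k) (TC j) = (if k = j then 1 / of_nat (orbit_card k) else 0)" .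
next
  fix k j assume k: "k \<in> Lam_int" and j: "j \<in> Lam_int"
  have kh: "k \<in> HH" and jh: "j \<in> HH" using Lam_HH[OF Lam_int_Lam] k j by blast+
  have "ipH (TS k) (TS j) = integral C (\<lambda>x. TS k (embH x) * cnj (TS j (embH x)))"
    by (rule ip_TS[OF kh jh])
  also have "\<dots> = (1/576) * (\<Sum>\<sigma>\<in>G4. \<Sum>\<tau>\<in>G4. if pvec k \<sigma> = pvec j \<tau> then of_int (sign \<sigma> * sign \<tau>) else 0)"
    by (rule int_TS[OF kh jh])
  also have "\<dots> = (1/576) * (if k = j then 24 else 0)"
    by (simp only: count_TS[OF k j])
  also have "\<dots> = (if k = j then 1 / 24 else 0)" by simp
  finally show "ipH (TS k) (TS j) = (if k = j then 1 / 24 else 0)" .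
qed


end
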